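(* The functions $R_F(x,y,z)$, $R_D(x,y,z)$, $R_J(x,y,z,p)$ and $(xyz)^{-1/2}$ are linearly independent with respect to coefficients that are rational functions of $x,y,z,p$. That is, if $\alpha,\beta,\gamma,\delta$ are rational functions of $x,y,z,p$ such that $$\alpha\, R_F(x,y,z)+\beta\, R_D(x,y,z)+\gamma\, R_J(x,y,z,p)+\delta\,(xyz)^{-1/2}\equiv 0$$ identically in the variables, then $\alpha,\beta,\gamma,\delta$ are all identically $0$.
   Context: For $x,y,z\ge 0$ with at most one of them zero, and $p>0$: $R_F(x,y,z)=\frac12\int_0^\infty[(t+x)(t+y)(t+z)]^{-1/2}\,dt$; $R_J(x,y,z,p)=\frac32\int_0^\infty[(t+x)(t+y)(t+z)]^{-1/2}(t+p)^{-1}\,dt$; $R_D(x,y,z)=R_J(x,y,z,z)=\frac32\int_0^\infty[(t+x)(t+y)]^{-1/2}(t+z)^{-3/2}\,dt$ (for $z>0$). *)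

theory Defs
  imports "HOL-Analysis.Analysis"
begin

definition RF :: "real \<Rightarrow> real \<Rightarrow> real \<Rightarrow> real" where
  "RF x y z = 1/2 * integral {0..} (\<lambda>t. 1 / sqrt ((t + x) * (t + y) * (t + z)))"

definition RJ :: "real \<Rightarrow> real \<Rightarrow> real \<Rightarrow> real \<Rightarrow> real" where
  "RJ x y z p = 3/2 * integral {0..} (\<lambda>t. 1 / (sqrt ((t + x) * (t + y) * (t + z)) * (t + p)))"

definition RD :: "real \<Rightarrow> real \<Rightarrow> real \<Rightarrow> real" where
  "RD x y z = RJ x y z z"

text \<open>Real polynomials in four variables x,y,z,p, represented by their coefficient
  function on exponent tuples (finitely supported).\<close>

type_synonym poly4 = "nat \<times> nat \<times> nat \<times> nat \<Rightarrow> real"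

definition is_poly4 :: "poly4 \<Rightarrow> bool" where
  "is_poly4 c \<longleftrightarrow> finite {m. c m \<noteq> 0}"

definition eval4 :: "poly4 \<Rightarrow> real \<Rightarrow> real \<Rightarrow> real \<Rightarrow> real \<Rightarrow> real" where
  "eval4 c x y z p =
     (\<Sum>m\<in>{m. c m \<noteq> 0}. (case m of (a, b, d, e) \<Rightarrow> c m * x ^ a * y ^ b * z ^ d * p ^ e))"

text \<open>A rational function is a quotient P/Q of such polynomials with Q not the zero
  polynomial; it is identically zero iff P is the zero polynomial.\<close>

definition rat4 :: "poly4 \<Rightarrow> poly4 \<Rightarrow> real \<Rightarrow> real \<Rightarrow> real \<Rightarrow> real \<Rightarrow> real" where
  "rat4 P Q x y z p = eval4 P x y z p / eval4 Q x y z p"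

end

theory Submission
  imports Defs "HOL-Real_Asymp.Real_Asymp" "HOL-Computational_Algebra.Polynomial"
begin

lemma I1:
  fixes k :: real assumes k: "k > 0"
  shows "((\<lambda>t. 1 / ((t + k) * sqrt (t + k))) has_integral 2 / sqrt k) {0..}"
proof (rule has_integral_to_inf)
  show "(\<lambda>t. 1 / ((t + k) * sqrt (t + k))) integrable_on {0..y}" for y
    by (intro integrable_continuous_interval continuous_intros) (use k in auto)
  show "1 / ((t + k) * sqrt (t + k)) \<ge> 0" if "t \<ge> 0" for t using that k by auto
  define F where "F t = - 2 / sqrt (t + k)" for t
  have "((\<lambda>t. 1 / ((t + k) * sqrt (t + k))) has_integral (F y - F 0)) {0..y}" if "y \<ge> 0" for y
    unfolding F_def using that k
    apply (intro fundamental_theorem_of_calculus that)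
     apply (auto intro!: derivative_eq_intros simp flip: has_real_derivative_iff_has_vector_derivative)
    apply (simp add: field_simps)
    done
  then have "\<forall>\<^sub>F y in at_top. integral {0..y} (\<lambda>t. 1 / ((t + k) * sqrt (t + k))) = F y - F 0"
    by (meson eventually_at_top_linorderI integral_unique)
  moreover have "((\<lambda>y. F y - F 0) \<longlongrightarrow> 2 / sqrt k) at_top"
  proof -
    have "(F \<longlongrightarrow> 0) at_top" unfolding F_def by real_asymp
    from tendsto_diff[OF this tendsto_const[of "F 0"]] show ?thesis by (simp add: F_def)
  qed
  ultimately show "((\<lambda>y. integral {0..y} (\<lambda>t. 1 / ((t + k) * sqrt (t + k)))) \<longlongrightarrow> 2 / sqrt k) at_top"
    by (simp add: filterlim_cong)
qed

lemma sqrt_shift_deriv: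
  fixes k t :: real assumes "t + k > 0"
  shows "((\<lambda>t. sqrt (t + k)) has_real_derivative 1 / (2 * sqrt (t + k))) (at t)"
proof -
  have "((\<lambda>t. sqrt (t + k)) has_real_derivative inverse (sqrt (t + k)) / 2 * 1) (at t)"
    by (rule DERIV_chain2[where f=sqrt and g="\<lambda>t. t + k", OF DERIV_real_sqrt[OF assms]]) (auto intro!: derivative_eq_intros)
  then show ?thesis by (simp add: field_simps)
qed

lemma I2:
  fixes a c :: real assumes a: "a > 0" and c: "c > 0"
  shows "((\<lambda>t. 1 / (sqrt (t + a) * sqrt (t + c) * (t + c))) has_integral 2 / (sqrt c * (sqrt a + sqrt c))) {0..}"
proof (rule has_integral_to_inf)
  show "(\<lambda>t. 1 / (sqrt (t + a) * sqrt (t + c) * (t + c))) integrable_on {0..y}" for y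
    by (intro integrable_continuous_interval continuous_intros) (use a c in auto)
  show "1 / (sqrt (t + a) * sqrt (t + c) * (t + c)) \<ge> 0" if "t \<ge> 0" for t using that a c by auto
  define F where "F t = - 2 / (sqrt (t + c) * (sqrt (t + a) + sqrt (t + c)))" for t
  have der: "(F has_real_derivative 1 / (sqrt (t + a) * sqrt (t + c) * (t + c))) (at t)" if "t \<ge> 0" for t
  proof -
    have p: "t + a > 0" "t + c > 0" using that a c by auto
    define h where "h t = sqrt (t + c) * (sqrt (t + a) + sqrt (t + c))" for t
    have hder: "(h has_real_derivative ((1 / (2 * sqrt (t + c))) * (sqrt (t + a) + sqrt (t + c)) + (1 / (2 * sqrt (t + a)) + 1 / (2 * sqrt (t + c))) * sqrt (t + c))) (at t)"
      unfolding h_def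
      by (intro DERIV_mult DERIV_add sqrt_shift_deriv p)
    have hnz: "h t \<noteq> 0" using p by (simp add: h_def) (smt (verit) real_sqrt_gt_zero)
    have "(F has_real_derivative
       (2 * ((1 / (2 * sqrt (t + c))) * (sqrt (t + a) + sqrt (t + c)) + (1 / (2 * sqrt (t + a)) + 1 / (2 * sqrt (t + c))) * sqrt (t + c)))
        / (sqrt (t + c) * (sqrt (t + a) + sqrt (t + c)))^2) (at t)"
    proof -
      have "F = (\<lambda>t. -2 / h t)" by (auto simp: F_def h_def)
      with DERIV_divide[OF DERIV_const hder hnz, of "-2"] show ?thesis
        by (simp add: h_def power2_eq_square add.commute)
    qed
    moreover have "(2 * ((1 / (2 * sqrt (t + c))) * (sqrt (t + a) + sqrt (t + c)) + (1 / (2 * sqrt (t + a)) + 1 / (2 * sqrt (t + c))) * sqrt (t + c)))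
        / (sqrt (t + c) * (sqrt (t + a) + sqrt (t + c)))^2 = 1 / (sqrt (t + a) * sqrt (t + c) * (t + c))"
    proof -
      define u where "u = sqrt (t + a)"
      define v where "v = sqrt (t + c)"
      have u: "u > 0" and v: "v > 0" using p by (auto simp: u_def v_def)
      have vv: "t + c = v * v" using p by (simp add: v_def)
      have uv: "u + v > 0" using u v by simp
      show ?thesis unfolding u_def[symmetric] v_def[symmetric] vv using u v uv
        apply (simp add: field_simps power2_eq_square)
        apply (rule dual_order.strict_implies_not_eq)
        apply (intro add_pos_pos mult_pos_pos; simp)
        done
    qed
    ultimately show ?thesis by simp
  qed
  have "((\<lambda>t. 1 / (sqrt (t + a) * sqrt (t + c) * (t + c))) has_integral (F y - F 0)) {0..y}" if "y \<ge> 0" for y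
    using that der
    by (intro fundamental_theorem_of_calculus that)
       (auto simp flip: has_real_derivative_iff_has_vector_derivative intro: has_field_derivative_at_within)
  then have "\<forall>\<^sub>F y in at_top. integral {0..y} (\<lambda>t. 1 / (sqrt (t + a) * sqrt (t + c) * (t + c))) = F y - F 0"
    by (meson eventually_at_top_linorderI integral_unique)
  moreover have "((\<lambda>y. F y - F 0) \<longlongrightarrow> 2 / (sqrt c * (sqrt a + sqrt c))) at_top"
  proof -
    have "(F \<longlongrightarrow> 0) at_top" unfolding F_def by real_asymp
    from tendsto_diff[OF this tendsto_const[of "F 0"]] show ?thesis by (simp add: F_def)
  qed
  ultimately show "((\<lambda>y. integral {0..y} (\<lambda>t. 1 / (sqrt (t + a) * sqrt (t + c) * (t + c)))) \<longlongrightarrow> 2 / (sqrt c * (sqrt a + sqrt c))) at_top"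
    by (simp add: filterlim_cong)
qed

lemma Ilog:
  fixes k :: real assumes k: "k > 0"
  shows "((\<lambda>t. 1 / (t + k)) has_integral (ln (1 + k) - ln k)) {0..1}"
proof -
  have "((\<lambda>t. 1 / (t + k)) has_integral (ln (1 + k) - ln (0 + k))) {0..1}"
    using k
    by (intro fundamental_theorem_of_calculus)
       (auto intro!: derivative_eq_intros simp flip: has_real_derivative_iff_has_vector_derivative simp: field_simps)
  then show ?thesis by simp
qed

lemma dom_int:
  fixes f g :: "real \<Rightarrow> real"
  assumes "continuous_on {0..} f" "g integrable_on {0..}" "\<And>t. t \<ge> 0 \<Longrightarrow> \<bar>f t\<bar> \<le> g t"
  shows "f integrable_on {0..}"
  by (rule measurable_bounded_by_integrable_imp_integrable_real[OF _ assms(2)])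
     (use assms in \<open>auto intro: continuous_imp_measurable_on_sets_lebesgue\<close>)

lemma sqrt3: "x \<ge> 0 \<Longrightarrow> y \<ge> 0 \<Longrightarrow> z \<ge> 0 \<Longrightarrow> sqrt (x * y * z) = sqrt x * sqrt y * sqrt z"
  by (simp add: real_sqrt_mult)

lemma h_int: "k > 0 \<Longrightarrow> (\<lambda>t. 1 / ((t + k) * sqrt (t + k))) integrable_on {0..}"
  using I1 by blast

lemma fJ_int:
  fixes x y z p :: real assumes "x > 0" "y > 0" "z > 0" "p > 0"
  shows "(\<lambda>t. 1 / (sqrt ((t + x) * (t + y) * (t + z)) * (t + p))) integrable_on {0..}"
proof -
  define m where "m = min (min x y) (min z p)"
  have m: "m > 0" "m \<le> x" "m \<le> y" "m \<le> z" "m \<le> p" using assms by (auto simp: m_def)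
  show ?thesis
  proof (rule dom_int)
    show "continuous_on {0..} (\<lambda>t. 1 / (sqrt ((t + x) * (t + y) * (t + z)) * (t + p)))"
      using assms by (intro continuous_intros) (auto simp: add_pos_pos)
    show "(\<lambda>t. (1/m) * (1 / ((t + m) * sqrt (t + m)))) integrable_on {0..}"
      using h_int[OF m(1)] by (rule integrable_on_mult_right)
    fix t :: real assume t: "t \<ge> 0"
    have s: "sqrt (t + m) \<le> sqrt (t + x)" "sqrt (t + m) \<le> sqrt (t + y)" "sqrt (t + m) \<le> sqrt (t + z)"
      using m by auto
    have sp: "sqrt (t + m) > 0" using m t by auto
    have "sqrt (t + m) * sqrt (t + m) * sqrt (t + m) \<le> sqrt (t + x) * sqrt (t + y) * sqrt (t + z)"
      using s sp by (meson less_le mult_mono order_trans zero_le_mult_iff real_sqrt_ge_zero)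
    moreover have "sqrt (t + m) * sqrt (t + m) = t + m" using m t by simp
    ultimately have A: "(t + m) * sqrt (t + m) \<le> sqrt ((t + x) * (t + y) * (t + z))"
      using assms t by (simp add: sqrt3)
    have B: "m \<le> t + p" using m t by simp
    have "(t + m) * sqrt (t + m) * m \<le> sqrt ((t + x) * (t + y) * (t + z)) * (t + p)"
      using A B m t sp by (intro mult_mono) auto
    moreover have "0 < (t + m) * sqrt (t + m) * m" using m t sp by auto
    ultimately have "1 / (sqrt ((t + x) * (t + y) * (t + z)) * (t + p)) \<le> 1 / ((t + m) * sqrt (t + m) * m)"
      by (intro divide_left_mono) auto
    moreover have "0 \<le> 1 / (sqrt ((t + x) * (t + y) * (t + z)) * (t + p))" using assms t by auto
    ultimately show "\<bar>1 / (sqrt ((t + x) * (t + y) * (t + z)) * (t + p))\<bar> \<le> (1/m) * (1 / ((t + m) * sqrt (t + m)))"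
      by (simp add: field_simps)
  qed
qed

lemma fF_int:
  fixes x y z :: real assumes "x > 0" "y > 0" "z > 0"
  shows "(\<lambda>t. 1 / sqrt ((t + x) * (t + y) * (t + z))) integrable_on {0..}"
proof -
  define m where "m = min x (min y z)"
  have m: "m > 0" "m \<le> x" "m \<le> y" "m \<le> z" using assms by (auto simp: m_def)
  show ?thesis
  proof (rule dom_int)
    show "continuous_on {0..} (\<lambda>t. 1 / sqrt ((t + x) * (t + y) * (t + z)))"
      using assms by (intro continuous_intros) (auto simp: add_pos_pos)
    show "(\<lambda>t. 1 / ((t + m) * sqrt (t + m))) integrable_on {0..}"
      using h_int[OF m(1)] .
    fix t :: real assume t: "t \<ge> 0"
    have s: "sqrt (t + m) \<le> sqrt (t + x)" "sqrt (t + m) \<le> sqrt (t + y)" "sqrt (t + m) \<le> sqrt (t + z)"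
      using m by auto
    have sp: "sqrt (t + m) > 0" using m t by auto
    have "sqrt (t + m) * sqrt (t + m) * sqrt (t + m) \<le> sqrt (t + x) * sqrt (t + y) * sqrt (t + z)"
      using s sp by (meson less_le mult_mono order_trans zero_le_mult_iff real_sqrt_ge_zero)
    moreover have "sqrt (t + m) * sqrt (t + m) = t + m" using m t by simp
    ultimately have A: "(t + m) * sqrt (t + m) \<le> sqrt ((t + x) * (t + y) * (t + z))"
      using assms t by (simp add: sqrt3)
    moreover have "0 < (t + m) * sqrt (t + m)" using m t sp by auto
    ultimately have "1 / sqrt ((t + x) * (t + y) * (t + z)) \<le> 1 / ((t + m) * sqrt (t + m))"
      using assms t by (intro divide_left_mono) (auto intro!: mult_pos_pos add_nonneg_pos)
    moreover have "0 \<le> 1 / sqrt ((t + x) * (t + y) * (t + z))" using assms t by auto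
    ultimately show "\<bar>1 / sqrt ((t + x) * (t + y) * (t + z))\<bar> \<le> 1 / ((t + m) * sqrt (t + m))"
      by simp
  qed
qed

lemma RJ_upper:
  fixes x y z p :: real assumes pos: "x > 0" "y > 0" "z > 0" "p > 0" and pz: "p \<le> z"
  shows "RJ x y z p \<le> 3 / (sqrt x * sqrt y * sqrt p)"
proof -
  let ?f = "\<lambda>t. 1 / (sqrt ((t + x) * (t + y) * (t + z)) * (t + p))"
  let ?g = "\<lambda>t. (1 / (sqrt x * sqrt y)) * (1 / ((t + p) * sqrt (t + p)))"
  have gi: "(?g has_integral (1 / (sqrt x * sqrt y)) * (2 / sqrt p)) {0..}"
    by (rule has_integral_mult_right[OF I1]) (use pos in auto)
  have le: "?f t \<le> ?g t" if t: "t \<ge> 0" for t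
  proof -
    have "sqrt x * sqrt y * sqrt (t + p) * (t + p) \<le> sqrt (t + x) * sqrt (t + y) * sqrt (t + z) * (t + p)"
      using pos t pz by (intro mult_right_mono mult_mono) auto
    moreover have "0 < sqrt x * sqrt y * sqrt (t + p) * (t + p)" using pos t by auto
    ultimately have "1 / (sqrt (t + x) * sqrt (t + y) * sqrt (t + z) * (t + p)) \<le> 1 / (sqrt x * sqrt y * sqrt (t + p) * (t + p))"
      by (intro divide_left_mono) (auto intro!: mult_pos_pos)
    moreover have eq: "sqrt ((t + x) * (t + y) * (t + z)) = sqrt (t + x) * sqrt (t + y) * sqrt (t + z)"
      using pos t by (intro sqrt3) auto
    ultimately show ?thesis by (simp add: ac_simps)
  qed
  have "integral {0..} ?f \<le> integral {0..} ?g"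
    by (rule integral_le[OF fJ_int[OF pos] _ le]) (use gi in auto)
  also have "\<dots> = 2 / (sqrt x * sqrt y * sqrt p)" using gi by (simp add: integral_unique)
  finally show ?thesis unfolding RJ_def by simp
qed

lemma RJ_lower:
  fixes x y z p :: real assumes pos: "x > 0" "y > 0" "z > 0" "p > 0"
  shows "RJ x y z p \<ge> 3/2 * (1 / sqrt ((1 + x) * (1 + y) * (1 + z))) * (ln (1 + p) - ln p)"
proof -
  define k where "k = 1 / sqrt ((1 + x) * (1 + y) * (1 + z))"
  have k: "k > 0" using pos by (simp add: k_def add_pos_pos)
  let ?f = "\<lambda>t. 1 / (sqrt ((t + x) * (t + y) * (t + z)) * (t + p))"
  have fi: "?f integrable_on {0..}" by (rule fJ_int[OF pos])
  have fi1: "?f integrable_on {0..1}"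
    by (intro integrable_continuous_interval continuous_intros) (use pos in \<open>auto intro!: add_nonneg_pos mult_pos_pos\<close>)
  have gi: "((\<lambda>t. k * (1 / (t + p))) has_integral k * (ln (1 + p) - ln p)) {0..1}"
    by (rule has_integral_mult_right[OF Ilog[OF pos(4)]])
  have le: "k * (1 / (t + p)) \<le> ?f t" if t: "t \<in> {0..1}" for t
  proof -
    have "sqrt ((t + x) * (t + y) * (t + z)) \<le> sqrt ((1 + x) * (1 + y) * (1 + z))"
      using pos t by (intro real_sqrt_le_mono mult_mono) (auto intro!: mult_nonneg_nonneg)
    moreover have "0 < sqrt ((t + x) * (t + y) * (t + z))" using pos t by (auto intro!: mult_pos_pos)
    ultimately have "k \<le> 1 / sqrt ((t + x) * (t + y) * (t + z))"
      unfolding k_def by (intro divide_left_mono) auto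
    then have "k / (t + p) \<le> (1 / sqrt ((t + x) * (t + y) * (t + z))) / (t + p)"
      by (rule divide_right_mono) (use t pos in auto)
    then show ?thesis by simp
  qed
  have "k * (ln (1 + p) - ln p) \<le> integral {0..1} ?f"
    using integral_le[OF _ fi1 le] gi by (simp add: integral_unique has_integral_integrable)
  also have "\<dots> \<le> integral {0..} ?f"
    by (rule integral_subset_le[OF _ fi1 fi]) (use pos in auto)
  finally have "3/2 * (k * (ln (1 + p) - ln p)) \<le> 3/2 * integral {0..} ?f" by simp
  then show ?thesis unfolding RJ_def k_def by (simp only: mult.assoc)
qed

lemma inv_sqrt_lower:
  fixes t Y :: real assumes "t \<ge> 0" "Y > 0"
  shows "1 / sqrt (t + Y) \<ge> 1 / sqrt Y - sqrt t / Y"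
proof -
  define s r q where "s = sqrt t" and "r = sqrt Y" and "q = sqrt (t + Y)"
  have s: "s \<ge> 0" and r: "r > 0" and q: "q > 0" using assms by (auto simp: s_def r_def q_def)
  have qq: "q * q = s * s + r * r" using assms by (simp add: s_def r_def q_def)
  have Yr: "Y = r * r" using assms by (simp add: r_def)
  have key: "q * r \<le> r * r + q * s"
  proof (cases "s \<ge> r")
    case True then show ?thesis using q r by (smt (verit) mult_left_mono mult_nonneg_nonneg)
  next
    case False
    have "q \<le> r + s"
    proof -
      have "q * q \<le> (r + s) * (r + s)" using qq s r by (simp add: algebra_simps)
      then show ?thesis using q r s by (smt (verit) mult_strict_mono)
    qed
    then have "q * (r - s) \<le> (r + s) * (r - s)" using False by (intro mult_right_mono) auto
    then show ?thesis using s q by (simp add: algebra_simps) (smt (verit) mult_nonneg_nonneg)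
  qed
  have "1 / r - s / (r * r) \<le> 1 / q"
    using key q r by (simp add: field_simps)
  then show ?thesis using assms by (simp add: s_def r_def q_def[symmetric] Yr[symmetric])
qed

lemma RF_upper:
  fixes X Y Z n :: real assumes pos: "X > 0" "Y > 0" "Z > 0" "n > 0" and le: "n \<le> X" "n \<le> Y" "n \<le> Z"
  shows "RF X Y Z \<le> 1 / sqrt n"
proof -
  let ?f = "\<lambda>t. 1 / sqrt ((t + X) * (t + Y) * (t + Z))"
  let ?g = "\<lambda>t. 1 / ((t + n) * sqrt (t + n))"
  have gi: "(?g has_integral 2 / sqrt n) {0..}" by (rule I1) (use pos in auto)
  have lef: "?f t \<le> ?g t" if t: "t \<ge> 0" for t
  proof -
    have "sqrt (t + n) * sqrt (t + n) * sqrt (t + n) \<le> sqrt (t + X) * sqrt (t + Y) * sqrt (t + Z)"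
      using pos t le by (intro mult_mono) auto
    moreover have "sqrt (t + n) * sqrt (t + n) = t + n" using pos t by simp
    moreover have "sqrt ((t + X) * (t + Y) * (t + Z)) = sqrt (t + X) * sqrt (t + Y) * sqrt (t + Z)"
      using pos t by (intro sqrt3) auto
    ultimately have A: "(t + n) * sqrt (t + n) \<le> sqrt ((t + X) * (t + Y) * (t + Z))" by simp
    moreover have "0 < (t + n) * sqrt (t + n)" using pos t by auto
    ultimately show ?thesis using pos t by (intro divide_left_mono) (auto intro!: mult_pos_pos add_nonneg_pos)
  qed
  have "integral {0..} ?f \<le> integral {0..} ?g"
    by (rule integral_le[OF fF_int[OF pos(1-3)] _ lef]) (use gi in auto)
  also have "\<dots> = 2 / sqrt n" using gi by (simp add: integral_unique)
  finally show ?thesis unfolding RF_def by simp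
qed

lemma RF_lower:
  fixes X Y Z M :: real assumes pos: "X > 0" "Y > 0" "Z > 0" and le: "X \<le> M" "Z \<le> M"
  shows "RF X Y Z \<ge> 1/2 * (1 / sqrt (1 + Y)) * (ln (1 + M) - ln M)"
proof -
  have M: "M > 0" using pos le by auto
  define k where "k = 1 / sqrt (1 + Y)"
  have k: "k > 0" using pos by (simp add: k_def)
  let ?f = "\<lambda>t. 1 / sqrt ((t + X) * (t + Y) * (t + Z))"
  have fi: "?f integrable_on {0..}" by (rule fF_int[OF pos])
  have fi1: "?f integrable_on {0..1}"
    by (intro integrable_continuous_interval continuous_intros) (use pos in \<open>auto intro!: add_nonneg_pos mult_pos_pos\<close>)
  have gi: "((\<lambda>t. k * (1 / (t + M))) has_integral k * (ln (1 + M) - ln M)) {0..1}"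
    by (rule has_integral_mult_right[OF Ilog[OF M]])
  have lef: "k * (1 / (t + M)) \<le> ?f t" if t: "t \<in> {0..1}" for t
  proof -
    have "sqrt ((t + X) * (t + Y) * (t + Z)) \<le> sqrt ((t + M) * (1 + Y) * (t + M))"
      using pos t le by (intro real_sqrt_le_mono mult_mono) (auto intro!: mult_nonneg_nonneg)
    also have "\<dots> = (t + M) * sqrt (1 + Y)" using M t pos
      by (simp add: real_sqrt_mult)
    finally have A: "sqrt ((t + X) * (t + Y) * (t + Z)) \<le> (t + M) * sqrt (1 + Y)" .
    have "0 < sqrt ((t + X) * (t + Y) * (t + Z))" using pos t by (auto intro!: mult_pos_pos)
    with A have "1 / ((t + M) * sqrt (1 + Y)) \<le> ?f t"
      using M t pos by (intro divide_left_mono) (auto intro!: mult_pos_pos add_nonneg_pos)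
    then show ?thesis by (simp add: k_def mult.commute)
  qed
  have "k * (ln (1 + M) - ln M) \<le> integral {0..1} ?f"
    using integral_le[OF _ fi1 lef] gi by (simp add: integral_unique has_integral_integrable)
  also have "\<dots> \<le> integral {0..} ?f"
    by (rule integral_subset_le[OF _ fi1 fi]) (use pos in auto)
  finally have "1/2 * (k * (ln (1 + M) - ln M)) \<le> 1/2 * integral {0..} ?f" by simp
  then show ?thesis unfolding RF_def k_def by (simp only: mult.assoc)
qed

lemma RD_bounds:
  fixes X Y Z :: real assumes pos: "X > 0" "Y > 0" "Z > 0"
  shows "RD X Y Z \<le> 3 / (sqrt Y * sqrt Z * (sqrt X + sqrt Z))"
    and "RD X Y Z \<ge> 3 / (sqrt Y * sqrt Z * (sqrt X + sqrt Z)) - 3 / (Y * sqrt Z)"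
proof -
  let ?f = "\<lambda>t. 1 / (sqrt ((t + X) * (t + Y) * (t + Z)) * (t + Z))"
  let ?g = "\<lambda>t. 1 / (sqrt (t + X) * sqrt (t + Z) * (t + Z))"
  let ?h = "\<lambda>t. 1 / ((t + Z) * sqrt (t + Z))"
  define G where "G = 2 / (sqrt Z * (sqrt X + sqrt Z))"
  have gi: "(?g has_integral G) {0..}" unfolding G_def by (rule I2) (use pos in auto)
  have hi: "(?h has_integral 2 / sqrt Z) {0..}" by (rule I1) (use pos in auto)
  have fi: "?f integrable_on {0..}" by (rule fJ_int) (use pos in auto)
  have feq: "?f t = ?g t * (1 / sqrt (t + Y))" if t: "t \<ge> 0" for t
  proof -
    have "sqrt ((t + X) * (t + Y) * (t + Z)) = sqrt (t + X) * sqrt (t + Y) * sqrt (t + Z)"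
      using pos t by (intro sqrt3) auto
    then show ?thesis by (simp add: ac_simps)
  qed
  have gpos: "?g t \<ge> 0" if "t \<ge> 0" for t using that pos by auto
  have up: "?f t \<le> (1 / sqrt Y) * ?g t" if t: "t \<ge> 0" for t
  proof -
    have "1 / sqrt (t + Y) \<le> 1 / sqrt Y" using pos t by (intro divide_left_mono) auto
    then have "?g t * (1 / sqrt (t + Y)) \<le> ?g t * (1 / sqrt Y)" by (intro mult_left_mono gpos t)
    then show ?thesis unfolding feq[OF t] by (rule order_trans) (simp add: ac_simps)
  qed
  have lo: "(1 / sqrt Y) * ?g t - (1 / Y) * ?h t \<le> ?f t" if t: "t \<ge> 0" for t
  proof -
    have "?g t * (1 / sqrt Y - sqrt t / Y) \<le> ?g t * (1 / sqrt (t + Y))"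
      by (intro mult_left_mono gpos t inv_sqrt_lower) (use pos t in auto)
    moreover have "?g t * sqrt t \<le> ?h t"
    proof -
      have "sqrt t \<le> sqrt (t + X)" using pos by auto
      then have "sqrt t / (sqrt (t + X) * sqrt (t + Z) * (t + Z)) \<le> sqrt (t + X) / (sqrt (t + X) * sqrt (t + Z) * (t + Z))"
        using pos t by (intro divide_right_mono) auto
      also have "\<dots> = ?h t"
      proof -
        have nz: "sqrt (t + X) \<noteq> 0" using pos t by auto
        then show ?thesis by (simp add: mult.assoc mult.commute)
      qed
      finally show ?thesis by simp
    qed
    ultimately have A: "?g t * (1 / sqrt Y - sqrt t / Y) \<le> ?g t * (1 / sqrt (t + Y))"
      and B: "?g t * sqrt t \<le> ?h t" by auto
    have C: "(1 / Y) * (?g t * sqrt t) \<le> (1 / Y) * ?h t"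
      by (rule mult_left_mono[OF B]) (use pos in simp)
    have D0: "\<And>G::real. G * (1 / sqrt Y - sqrt t / Y) = (1 / sqrt Y) * G - (1 / Y) * (G * sqrt t)"
      by (simp add: algebra_simps)
    note D = D0[of "?g t"]
    have "(1 / sqrt Y) * ?g t - (1 / Y) * ?h t \<le> ?g t * (1 / sqrt (t + Y))"
      using A C D by linarith
    then show ?thesis unfolding feq[OF t] .
  qed
  have "integral {0..} ?f \<le> integral {0..} (\<lambda>t. (1 / sqrt Y) * ?g t)"
    by (rule integral_le[OF fi integrable_on_mult_right[OF has_integral_integrable[OF gi]] up]) simp
  also have "\<dots> = (1 / sqrt Y) * G" by (rule integral_unique[OF has_integral_mult_right[OF gi]])
  finally have "3/2 * integral {0..} ?f \<le> 3/2 * ((1 / sqrt Y) * G)" by simp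
  then show "RD X Y Z \<le> 3 / (sqrt Y * sqrt Z * (sqrt X + sqrt Z))"
    unfolding RD_def RJ_def G_def by (simp add: field_simps)
  have li: "((\<lambda>t. (1 / sqrt Y) * ?g t - (1 / Y) * ?h t) has_integral (1 / sqrt Y) * G - (1 / Y) * (2 / sqrt Z)) {0..}"
    by (intro has_integral_diff has_integral_mult_right gi hi)
  have "(1 / sqrt Y) * G - (1 / Y) * (2 / sqrt Z) \<le> integral {0..} ?f"
    using integral_le[OF _ fi lo] li by (simp add: integral_unique has_integral_integrable)
  then have "3/2 * ((1 / sqrt Y) * G - (1 / Y) * (2 / sqrt Z)) \<le> 3/2 * integral {0..} ?f" by simp
  then show "RD X Y Z \<ge> 3 / (sqrt Y * sqrt Z * (sqrt X + sqrt Z)) - 3 / (Y * sqrt Z)"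
    unfolding RD_def RJ_def G_def by (simp add: field_simps)
qed

lemma RJ_pos:
  fixes x y z p :: real assumes pos: "x > 0" "y > 0" "z > 0" "p > 0"
  shows "RJ x y z p > 0"
proof -
  have "ln p < ln (1 + p)" using pos by simp
  then have "0 < 3/2 * (1 / sqrt ((1 + x) * (1 + y) * (1 + z))) * (ln (1 + p) - ln p)"
    using pos by (intro mult_pos_pos) (auto intro!: mult_pos_pos)
  with RJ_lower[OF pos] show ?thesis by linarith
qed

lemma RJ_lim1:
  fixes x y z :: real assumes pos: "x > 0" "y > 0" "z > 0"
  shows "filterlim (\<lambda>p. RJ x y z p) at_top (at_right 0)"
proof -
  define k where "k = 3/2 * (1 / sqrt ((1 + x) * (1 + y) * (1 + z)))"
  have k: "k > 0" using pos by (simp add: k_def add_pos_pos)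
  have "filterlim (\<lambda>p. k * (ln (1 + p) - ln p)) at_top (at_right 0)"
    using k by real_asymp
  moreover have "eventually (\<lambda>p. k * (ln (1 + p) - ln p) \<le> RJ x y z p) (at_right 0)"
    unfolding eventually_at_right_field
    by (rule exI[of _ 1]) (use RJ_lower[OF pos] in \<open>auto simp: k_def\<close>)
  ultimately show ?thesis by (rule filterlim_at_top_mono)
qed

lemma RJ_lim2:
  fixes x y z :: real assumes pos: "x > 0" "y > 0" "z > 0"
  shows "((\<lambda>p. p * RJ x y z p) \<longlongrightarrow> 0) (at_right 0)"
proof (rule tendsto_sandwich[of "\<lambda>_. 0" _ _ "\<lambda>p. p * (3 / (sqrt x * sqrt y * sqrt p))"])
  show "eventually (\<lambda>p. 0 \<le> p * RJ x y z p) (at_right 0)"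
    unfolding eventually_at_right_field
    by (rule exI[of _ 1]) (use RJ_pos[OF pos] in \<open>auto intro: less_imp_le\<close>)
  show "eventually (\<lambda>p. p * RJ x y z p \<le> p * (3 / (sqrt x * sqrt y * sqrt p))) (at_right 0)"
    unfolding eventually_at_right_field
  proof (rule exI[of _ z], intro conjI allI impI)
    fix p :: real assume p: "0 < p" "p < z"
    have "RJ x y z p \<le> 3 / (sqrt x * sqrt y * sqrt p)" using p pos by (intro RJ_upper) auto
    then show "p * RJ x y z p \<le> p * (3 / (sqrt x * sqrt y * sqrt p))" using p by (intro mult_left_mono) auto
  qed (use pos in auto)
  show "((\<lambda>p. p * (3 / (sqrt x * sqrt y * sqrt p))) \<longlongrightarrow> 0) (at_right 0)"
    using pos by real_asymp
qed simp

lemma RF_pos: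
  fixes X Y Z :: real assumes pos: "X > 0" "Y > 0" "Z > 0"
  shows "RF X Y Z > 0"
proof -
  define M where "M = max X Z"
  have M: "M > 0" "X \<le> M" "Z \<le> M" using pos by (auto simp: M_def)
  have "ln M < ln (1 + M)" using M by simp
  then have "0 < 1/2 * (1 / sqrt (1 + Y)) * (ln (1 + M) - ln M)"
    using pos by (intro mult_pos_pos) auto
  with RF_lower[OF pos M(2,3)] show ?thesis by linarith
qed

lemma RF_lim1:
  fixes a y c :: real assumes pos: "a > 0" "y > 0" "c > 0"
  shows "filterlim (\<lambda>e. RF (e * a) y (e * c)) at_top (at_right 0)"
proof -
  define M where "M = max a c"
  have M: "M > 0" "a \<le> M" "c \<le> M" using pos by (auto simp: M_def)
  define k where "k = 1/2 * (1 / sqrt (1 + y))"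
  have k: "k > 0" using pos by (simp add: k_def)
  have "filterlim (\<lambda>e. k * (ln (1 + e * M) - ln (e * M))) at_top (at_right 0)"
    using k M by real_asymp
  moreover have "eventually (\<lambda>e. k * (ln (1 + e * M) - ln (e * M)) \<le> RF (e * a) y (e * c)) (at_right 0)"
    unfolding eventually_at_right_field
    by (rule exI[of _ 1]) (use RF_lower pos M in \<open>auto simp: k_def\<close>)
  ultimately show ?thesis by (rule filterlim_at_top_mono)
qed

lemma RF_lim2:
  fixes a y c :: real assumes pos: "a > 0" "y > 0" "c > 0"
  shows "((\<lambda>e. e * RF (e * a) y (e * c)) \<longlongrightarrow> 0) (at_right 0)"
proof -
  define n where "n = min a c"
  have n: "n > 0" "n \<le> a" "n \<le> c" using pos by (auto simp: n_def)
  show ?thesis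
  proof (rule tendsto_sandwich[of "\<lambda>_. 0" _ _ "\<lambda>e. e * (1 / sqrt (e * n))"])
    show "eventually (\<lambda>e. 0 \<le> e * RF (e * a) y (e * c)) (at_right 0)"
      unfolding eventually_at_right_field
      by (rule exI[of _ 1]) (use RF_pos pos in \<open>auto intro: less_imp_le\<close>)
    show "eventually (\<lambda>e. e * RF (e * a) y (e * c) \<le> e * (1 / sqrt (e * n))) (at_right 0)"
      unfolding eventually_at_right_field
    proof (rule exI[of _ "y / n"], intro conjI allI impI)
      show "0 < y / n" using pos n by simp
      fix e :: real assume e: "0 < e" "e < y / n"
      have "e * n \<le> y" using e n by (simp add: field_simps)
      moreover have "e * n \<le> e * a" "e * n \<le> e * c" using e n by auto
      ultimately have "RF (e * a) y (e * c) \<le> 1 / sqrt (e * n)"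
        using e n pos by (intro RF_upper) auto
      then show "e * RF (e * a) y (e * c) \<le> e * (1 / sqrt (e * n))"
        using e by (intro mult_left_mono) auto
    qed
    show "((\<lambda>e. e * (1 / sqrt (e * n))) \<longlongrightarrow> 0) (at_right 0)"
      using n by real_asymp
  qed simp
qed

lemma RD_lim:
  fixes a y c :: real assumes pos: "a > 0" "y > 0" "c > 0"
  shows "((\<lambda>e. e * RD (e * a) y (e * c)) \<longlongrightarrow> 3 / (sqrt y * sqrt c * (sqrt a + sqrt c))) (at_right 0)"
proof -
  define L where "L = 3 / (sqrt y * sqrt c * (sqrt a + sqrt c))"
  have key: "e * (3 / (sqrt y * sqrt (e * c) * (sqrt (e * a) + sqrt (e * c)))) = L" if e: "e > 0" for e
  proof -
    have s: "sqrt (e * c) = sqrt e * sqrt c" "sqrt (e * a) = sqrt e * sqrt a" by (simp_all add: real_sqrt_mult)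
    have ee: "sqrt e * sqrt e = e" using e by simp
    have "sqrt y * sqrt (e * c) * (sqrt (e * a) + sqrt (e * c)) = (sqrt e * sqrt e) * (sqrt y * sqrt c * (sqrt a + sqrt c))"
      unfolding s by (simp add: algebra_simps del: real_sqrt_mult_self)
    also have "\<dots> = e * (sqrt y * sqrt c * (sqrt a + sqrt c))" by (simp only: ee)
    finally have D: "sqrt y * sqrt (e * c) * (sqrt (e * a) + sqrt (e * c)) = e * (sqrt y * sqrt c * (sqrt a + sqrt c))" .
    have Dp: "sqrt y * sqrt c * (sqrt a + sqrt c) > 0" using pos by (auto intro!: mult_pos_pos add_pos_pos)
    have gen: "\<And>W::real. W > 0 \<Longrightarrow> e * (3 / (e * W)) = 3 / W" using e by simp
    show ?thesis unfolding D L_def by (rule gen[OF Dp])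
  qed
  show ?thesis unfolding L_def[symmetric]
  proof (rule tendsto_sandwich[of "\<lambda>e. L - e * (3 / (y * sqrt (e * c)))" _ _ "\<lambda>_. L"])
    show "eventually (\<lambda>e. L - e * (3 / (y * sqrt (e * c))) \<le> e * RD (e * a) y (e * c)) (at_right 0)"
      unfolding eventually_at_right_field
    proof (rule exI[of _ 1], intro conjI allI impI)
      fix e :: real assume e: "0 < e" "e < 1"
      have "e * (3 / (sqrt y * sqrt (e * c) * (sqrt (e * a) + sqrt (e * c))) - 3 / (y * sqrt (e * c)))
            \<le> e * RD (e * a) y (e * c)"
        using e pos by (intro mult_left_mono RD_bounds(2)) auto
      then show "L - e * (3 / (y * sqrt (e * c))) \<le> e * RD (e * a) y (e * c)"
        using key[OF e(1)] by (simp add: right_diff_distrib)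
    qed simp
    show "eventually (\<lambda>e. e * RD (e * a) y (e * c) \<le> L) (at_right 0)"
      unfolding eventually_at_right_field
    proof (rule exI[of _ 1], intro conjI allI impI)
      fix e :: real assume e: "0 < e" "e < 1"
      have "e * RD (e * a) y (e * c) \<le> e * (3 / (sqrt y * sqrt (e * c) * (sqrt (e * a) + sqrt (e * c))))"
        using e pos by (intro mult_left_mono RD_bounds(1)) auto
      then show "e * RD (e * a) y (e * c) \<le> L" using key[OF e(1)] by simp
    qed simp
    show "((\<lambda>e. L - e * (3 / (y * sqrt (e * c)))) \<longlongrightarrow> L) (at_right 0)"
      using pos by real_asymp
  qed simp
qed

lemma eval4_sum:
  assumes "finite S" "{m. P m \<noteq> 0} \<subseteq> S"
  shows "eval4 P x y z p = (\<Sum>m\<in>S. (case m of (a, b, d, e) \<Rightarrow> P m * x ^ a * y ^ b * z ^ d * p ^ e))"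
  unfolding eval4_def
  by (rule sum.mono_neutral_left[OF assms]) auto

lemma eval4_zero [simp]: "eval4 (\<lambda>_. 0) x y z p = 0"
  by (simp add: eval4_def)

definition polyP :: "poly4 \<Rightarrow> real \<Rightarrow> real \<Rightarrow> real \<Rightarrow> real poly" where
  "polyP P x y z = (\<Sum>m\<in>{m. P m \<noteq> 0}. (case m of (a, b, d, e) \<Rightarrow> monom (P m * x ^ a * y ^ b * z ^ d) e))"

lemma poly_polyP: "poly (polyP P x y z) p = eval4 P x y z p"
  unfolding polyP_def eval4_def poly_sum
  by (rule sum.cong) (auto simp: poly_monom split: prod.splits)

definition polyZ :: "poly4 \<Rightarrow> real \<Rightarrow> real \<Rightarrow> real \<Rightarrow> real poly" where
  "polyZ P x y p = (\<Sum>m\<in>{m. P m \<noteq> 0}. (case m of (a, b, d, e) \<Rightarrow> monom (P m * x ^ a * y ^ b * p ^ e) d))"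

lemma poly_polyZ: "poly (polyZ P x y p) z = eval4 P x y z p"
  unfolding polyZ_def eval4_def poly_sum
  by (rule sum.cong) (auto simp: poly_monom split: prod.splits)

definition kr :: "nat \<Rightarrow> nat \<times> nat \<times> nat \<times> nat \<Rightarrow> nat" where
  "kr D m = (case m of (a, b, d, e) \<Rightarrow> a + D * (b + D * (d + D * e)))"

lemma digit_inj:
  fixes D a a' u u' :: nat
  assumes "a < D" "a' < D" "a + D * u = a' + D * u'"
  shows "a = a' \<and> u = u'"
proof -
  have 1: "(a + D * u) mod D = a" "(a + D * u) div D = u" using assms(1) by auto
  have 2: "(a' + D * u') mod D = a'" "(a' + D * u') div D = u'" using assms(2) by auto
  show ?thesis by (metis 1 2 assms(3))
qed

lemma kr_inj:
  assumes "\<forall>i\<in>{a,b,d,e,a',b',d',e'}. i < D" "kr D (a,b,d,e) = kr D (a',b',d',e')"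
  shows "(a,b,d,e) = (a',b',d',e')"
  using assms digit_inj[of a D a' "b + D * (d + D * e)" "b' + D * (d' + D * e')"]
    digit_inj[of b D b' "d + D * e" "d' + D * e'"] digit_inj[of d D d' e e']
  by (auto simp: kr_def)

definition krpoly :: "nat \<Rightarrow> poly4 \<Rightarrow> real poly" where
  "krpoly D P = (\<Sum>m\<in>{m. P m \<noteq> 0}. monom (P m) (kr D m))"

lemma poly_krpoly: "poly (krpoly D P) t = eval4 P t (t ^ D) (t ^ (D * D)) (t ^ (D * D * D))"
  unfolding krpoly_def eval4_def poly_sum
proof (rule sum.cong)
  fix m assume "m \<in> {m. P m \<noteq> 0}"
  obtain a b d e where m: "m = (a, b, d, e)" by (cases m) auto
  have "t ^ kr D m = t ^ a * (t ^ D) ^ b * (t ^ (D * D)) ^ d * (t ^ (D * D * D)) ^ e"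
    by (simp add: m kr_def power_add power_mult[symmetric] algebra_simps)
  then show "poly (monom (P m) (kr D m)) t = (case m of (a, b, d, e) \<Rightarrow> P m * t ^ a * (t ^ D) ^ b * (t ^ (D * D)) ^ d * (t ^ (D * D * D)) ^ e)"
    by (simp add: poly_monom m)
qed simp

lemma krpoly_nz:
  assumes P: "is_poly4 P" "P \<noteq> (\<lambda>_. 0)"
    and D: "\<And>a b d e. P (a, b, d, e) \<noteq> 0 \<Longrightarrow> a < D \<and> b < D \<and> d < D \<and> e < D"
  shows "krpoly D P \<noteq> 0"
proof -
  obtain m0 where m0: "P m0 \<noteq> 0" using P by (meson ext)
  have fin: "finite {m. P m \<noteq> 0}" using P by (simp add: is_poly4_def)
  have "coeff (krpoly D P) (kr D m0) = (\<Sum>m\<in>{m. P m \<noteq> 0}. if m = m0 then P m else 0)"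
    unfolding krpoly_def coeff_sum coeff_monom
  proof (rule sum.cong)
    fix m assume m: "m \<in> {m. P m \<noteq> 0}"
    obtain a b d e where me: "m = (a, b, d, e)" by (cases m) auto
    obtain a' b' d' e' where m0e: "m0 = (a', b', d', e')" by (cases m0) auto
    have "kr D m = kr D m0 \<longleftrightarrow> m = m0"
      using kr_inj[of a b d e a' b' d' e' D] D[of a b d e] D[of a' b' d' e'] m m0 me m0e by auto
    then show "(if kr D m = kr D m0 then P m else 0) = (if m = m0 then P m else 0)" by simp
  qed simp
  also have "\<dots> = P m0" using fin m0 by (simp add: sum.delta)
  finally show ?thesis using m0 by auto
qed

lemma finite_eventually_notin:
  fixes S :: "real set" assumes "finite S"
  shows "eventually (\<lambda>p. p \<notin> S) (at_right 0)"
proof -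
  define T where "T = {r\<in>S. r > 0} \<union> {1}"
  have T: "finite T" "T \<noteq> {}" using assms by (auto simp: T_def)
  define b where "b = Min T"
  have "b \<in> T" unfolding b_def using T by (rule Min_in)
  then have b: "b > 0" by (auto simp: T_def)
  show ?thesis unfolding eventually_at_right_field
  proof (rule exI[of _ b], intro conjI allI impI b)
    fix p :: real assume p: "0 < p" "p < b"
    show "p \<notin> S"
    proof
      assume "p \<in> S" then have "p \<in> T" using p by (auto simp: T_def)
      then have "b \<le> p" unfolding b_def using T by simp
      with p show False by simp
    qed
  qed
qed

lemma poly_eventually_nz:
  fixes q :: "real poly" assumes "q \<noteq> 0"
  shows "eventually (\<lambda>p. poly q p \<noteq> 0) (at_right 0)"
  using finite_eventually_notin[OF poly_roots_finite[OF assms]] by simp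

lemma poly_eq_infinite:
  fixes p q :: "real poly"
  assumes "infinite S" "\<And>x. x \<in> S \<Longrightarrow> poly p x = poly q x"
  shows "p = q"
proof (rule ccontr)
  assume "p \<noteq> q"
  then have "p - q \<noteq> 0" by simp
  then have "finite {x. poly (p - q) x = 0}" by (rule poly_roots_finite)
  moreover have "S \<subseteq> {x. poly (p - q) x = 0}" using assms(2) by auto
  ultimately show False using assms(1) finite_subset by blast
qed

lemma generic_point:
  assumes fin: "finite F" and F: "\<And>P. P \<in> F \<Longrightarrow> is_poly4 P \<and> P \<noteq> (\<lambda>_. 0)"
  shows "\<exists>x y z p. x > 0 \<and> y > 0 \<and> z > 0 \<and> p > 0 \<and> (\<forall>P\<in>F. eval4 P x y z p \<noteq> 0)"
proof -
  define S where "S = (\<Union>P\<in>F. (\<lambda>(a, b, d, e). a + b + d + e) ` {m. P m \<noteq> 0})"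
  have "finite S" unfolding S_def using fin F by (auto simp: is_poly4_def)
  then obtain D where D: "\<And>n. n \<in> S \<Longrightarrow> n < D" by (meson finite_nat_set_iff_bounded)
  have Db: "a < D \<and> b < D \<and> d < D \<and> e < D" if "P \<in> F" "P (a, b, d, e) \<noteq> 0" for P a b d e
  proof -
    have "a + b + d + e \<in> S" unfolding S_def using that by force
    then show ?thesis using D by fastforce
  qed
  define U where "U = (\<Union>P\<in>F. {t. poly (krpoly D P) t = 0})"
  have "finite U" unfolding U_def using fin
    by (intro finite_UN_I poly_roots_finite krpoly_nz) (use F Db in auto)
  then have "infinite ({0<..} - U)" by (intro Diff_infinite_finite infinite_Ioi)
  then obtain t :: real where t: "t \<in> {0<..} - U" using infinite_imp_nonempty by blast
  show ?thesis
  proof (intro exI conjI ballI)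
    show "t > 0" "t ^ D > 0" "t ^ (D * D) > 0" "t ^ (D * D * D) > 0" using t by auto
    fix P assume "P \<in> F"
    then show "eval4 P t (t ^ D) (t ^ (D * D)) (t ^ (D * D * D)) \<noteq> 0"
      using t unfolding U_def by (auto simp: poly_krpoly)
  qed
qed

definition ordS :: "poly4 \<Rightarrow> nat" where
  "ordS P = Min ((\<lambda>(a, b, d, e). a + d) ` {m. P m \<noteq> 0})"

definition LS :: "poly4 \<Rightarrow> poly4" where
  "LS P = (\<lambda>m. case m of (a, b, d, e) \<Rightarrow> if a + d = ordS P then P m else 0)"

lemma LS_poly: "is_poly4 P \<Longrightarrow> is_poly4 (LS P)"
  unfolding is_poly4_def
  by (rule finite_subset[rotated]) (auto simp: LS_def split: prod.splits if_splits)

lemma LS_zero: "LS (\<lambda>_. 0) = (\<lambda>_. 0)"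
  by (auto simp: LS_def split: prod.splits)

lemma LS_nz:
  assumes "is_poly4 P" "P \<noteq> (\<lambda>_. 0)"
  shows "LS P \<noteq> (\<lambda>_. 0)"
proof -
  let ?I = "(\<lambda>(a, b, d, e). a + d) ` {m. P m \<noteq> 0}"
  have fin: "finite ?I" using assms by (simp add: is_poly4_def)
  have ne: "?I \<noteq> {}" using assms by (auto intro: ext)
  have "ordS P \<in> ?I" unfolding ordS_def using fin ne by (rule Min_in)
  then obtain a b d e where m: "P (a, b, d, e) \<noteq> 0" "a + d = ordS P" by auto
  then have "LS P (a, b, d, e) \<noteq> 0" by (simp add: LS_def)
  then show ?thesis by auto
qed

lemma ordS_le:
  assumes "is_poly4 P" "P (a, b, d, e) \<noteq> 0"
  shows "ordS P \<le> a + d"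
proof -
  let ?I = "(\<lambda>(a, b, d, e). a + d) ` {m. P m \<noteq> 0}"
  have fin: "finite ?I" using assms by (simp add: is_poly4_def)
  have "a + d \<in> ?I" using assms by force
  then show ?thesis unfolding ordS_def using fin by simp
qed

lemma LS_lim:
  assumes P: "is_poly4 P"
  shows "((\<lambda>e. eval4 P (e * a) y (e * c) p / e ^ ordS P) \<longlongrightarrow> eval4 (LS P) a y c p) (at_right 0)"
proof -
  let ?S = "{m. P m \<noteq> 0}"
  have fin: "finite ?S" using P by (simp add: is_poly4_def)
  define n where "n = ordS P"
  define T :: "nat \<times> nat \<times> nat \<times> nat \<Rightarrow> real" where "T m = (case m of (i, j, k, l) \<Rightarrow> P m * a ^ i * y ^ j * c ^ k * p ^ l)" for m
  define ex :: "nat \<times> nat \<times> nat \<times> nat \<Rightarrow> nat" where "ex m = (case m of (i, j, k, l) \<Rightarrow> i + k - n)" for m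
  have L: "eval4 (LS P) a y c p = (\<Sum>m\<in>?S. T m * 0 ^ ex m)"
  proof -
    have "eval4 (LS P) a y c p = (\<Sum>m\<in>?S. (case m of (i, j, k, l) \<Rightarrow> LS P m * a ^ i * y ^ j * c ^ k * p ^ l))"
      by (rule eval4_sum[OF fin]) (auto simp: LS_def split: prod.splits if_splits)
    also have "\<dots> = (\<Sum>m\<in>?S. T m * 0 ^ ex m)"
    proof (rule sum.cong)
      fix m assume m: "m \<in> ?S"
      obtain i j k l where me: "m = (i, j, k, l)" by (cases m) auto
      have "n \<le> i + k" unfolding n_def using ordS_le[OF P] m me by auto
      then show "(case m of (i, j, k, l) \<Rightarrow> LS P m * a ^ i * y ^ j * c ^ k * p ^ l) = T m * 0 ^ ex m"
        by (auto simp: me T_def ex_def LS_def n_def)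
    qed simp
    finally show ?thesis .
  qed
  have ev: "eventually (\<lambda>e. eval4 P (e * a) y (e * c) p / e ^ n = (\<Sum>m\<in>?S. T m * e ^ ex m)) (at_right 0)"
    unfolding eventually_at_right_field
  proof (rule exI[of _ 1], intro conjI allI impI)
    fix e :: real assume e: "0 < e" "e < 1"
    have "eval4 P (e * a) y (e * c) p / e ^ n = (\<Sum>m\<in>?S. (case m of (i, j, k, l) \<Rightarrow> P m * (e * a) ^ i * y ^ j * (e * c) ^ k * p ^ l) / e ^ n)"
      unfolding eval4_def by (simp add: sum_divide_distrib)
    also have "\<dots> = (\<Sum>m\<in>?S. T m * e ^ ex m)"
    proof (rule sum.cong)
      fix m assume m: "m \<in> ?S"
      obtain i j k l where me: "m = (i, j, k, l)" by (cases m) auto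
      have le: "n \<le> i + k" unfolding n_def using ordS_le[OF P] m me by auto
      have "e ^ (i + k) = e ^ n * e ^ (i + k - n)" using le by (simp add: power_add[symmetric])
      then show "(case m of (i, j, k, l) \<Rightarrow> P m * (e * a) ^ i * y ^ j * (e * c) ^ k * p ^ l) / e ^ n = T m * e ^ ex m"
        using e by (simp add: me T_def ex_def power_mult_distrib power_add[symmetric] field_simps)
    qed simp
    finally show "eval4 P (e * a) y (e * c) p / e ^ n = (\<Sum>m\<in>?S. T m * e ^ ex m)" .
  qed simp
  have "((\<lambda>e. \<Sum>m\<in>?S. T m * e ^ ex m) \<longlongrightarrow> (\<Sum>m\<in>?S. T m * 0 ^ ex m)) (at_right 0)"
    by (intro tendsto_intros)
  moreover have "eventually (\<lambda>e. (\<Sum>m\<in>?S. T m * e ^ ex m) = eval4 P (e * a) y (e * c) p / e ^ n) (at_right 0)"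
    using ev by (rule eventually_mono) simp
  ultimately show ?thesis unfolding L n_def[symmetric] by (rule Lim_transform_eventually)
qed

lemma at_right_0_nontriv: "at_right (0::real) \<noteq> bot"
  by (simp add: trivial_limit_at_right_real)

lemma poly_X_decomp:
  fixes C :: "real poly" assumes "C \<noteq> 0"
  obtains k C1 where "\<And>p. poly C p = p ^ k * poly C1 p" "poly C1 0 \<noteq> 0"
proof -
  obtain C1 where C1: "C = [:- 0, 1:] ^ order 0 C * C1" "\<not> [:- 0, 1:] dvd C1"
    using order_decomp[OF assms, of 0] by blast
  have "poly C p = p ^ order 0 C * poly C1 p" for p
    by (subst C1(1)) (simp)
  moreover have "poly C1 0 \<noteq> 0" using C1(2) by (simp add: poly_eq_0_iff_dvd)
  ultimately show ?thesis using that by blast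
qed

lemma log_lemma:
  fixes f :: "real \<Rightarrow> real" and C R :: "real poly"
  assumes f: "filterlim f at_top (at_right 0)"
    and pf: "((\<lambda>p. p * f p) \<longlongrightarrow> 0) (at_right 0)"
    and C: "C \<noteq> 0"
    and ev: "eventually (\<lambda>p. poly C p * f p = poly R p) (at_right 0)"
  shows False
proof -
  obtain k C1 where C1: "\<And>p. poly C p = p ^ k * poly C1 p" "poly C1 0 \<noteq> 0"
    using poly_X_decomp[OF C] by blast
  have C1ev: "eventually (\<lambda>p. poly C1 p \<noteq> 0) (at_right 0)"
  proof -
    have "(poly C1 \<longlongrightarrow> poly C1 0) (at_right 0)"
      by (intro tendsto_intros)
    then show ?thesis using C1(2) by (rule tendsto_imp_eventually_ne)
  qed
  have fpos: "eventually (\<lambda>p. f p > 0) (at_right 0)"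
    using f unfolding filterlim_at_top_dense by blast
  have ppos: "eventually (\<lambda>p. p > 0) (at_right (0::real))" by (rule eventually_at_right_less)
  show False
  proof (cases "R = 0")
    case True
    have "eventually (\<lambda>p. False) (at_right (0::real))"
      using ev C1ev fpos ppos by eventually_elim (simp add: C1 True)
    then show False using at_right_0_nontriv by (simp add: eventually_False)
  next
    case False
    obtain j R1 where R1: "\<And>p. poly R p = p ^ j * poly R1 p" "poly R1 0 \<noteq> 0"
      using poly_X_decomp[OF False] by blast
    show False
    proof (cases "k \<le> j")
      case True
      have A: "eventually (\<lambda>p. f p = p ^ (j - k) * poly R1 p / poly C1 p) (at_right 0)"
        using ev C1ev ppos
      proof eventually_elim
        case (elim p)
        have "p ^ j = p ^ k * p ^ (j - k)" using True by (simp add: power_add[symmetric])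
        with elim show ?case by (simp add: C1 R1 field_simps)
      qed
      have B: "((\<lambda>p. p ^ (j - k) * poly R1 p / poly C1 p) \<longlongrightarrow> 0 ^ (j - k) * poly R1 0 / poly C1 0) (at_right 0)"
        using C1(2) by (intro tendsto_intros) auto
      have "(f \<longlongrightarrow> 0 ^ (j - k) * poly R1 0 / poly C1 0) (at_right 0)"
        using tendsto_cong[OF A] B by simp
      then show False
        using not_tendsto_and_filterlim_at_infinity[OF at_right_0_nontriv _ filterlim_at_top_imp_at_infinity[OF f]]
        by blast
    next
      case False
      have "eventually (\<lambda>p. p ^ (k - j - 1) * (p * f p) = poly R1 p / poly C1 p) (at_right 0)"
        using ev C1ev ppos
      proof eventually_elim
        case (elim p)
        have kk: "k = j + (k - j - 1) + 1" using False by simp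
        have "p ^ k = p ^ j * (p ^ (k - j - 1) * p)"
          by (subst kk) (simp only: power_add power_one_right mult.assoc)
        with elim show ?case by (simp add: C1 R1 field_simps)
      qed
      moreover have "((\<lambda>p. p ^ (k - j - 1) * (p * f p)) \<longlongrightarrow> 0 ^ (k - j - 1) * 0) (at_right 0)"
        by (intro tendsto_intros pf)
      ultimately have "((\<lambda>p. poly R1 p / poly C1 p) \<longlongrightarrow> 0) (at_right 0)"
        by (simp add: tendsto_cong)
      moreover have "((\<lambda>p. poly R1 p / poly C1 p) \<longlongrightarrow> poly R1 0 / poly C1 0) (at_right 0)"
        using C1(2) by (intro tendsto_intros) auto
      ultimately have "poly R1 0 / poly C1 0 = 0"
        using tendsto_unique[OF at_right_0_nontriv] by metis
      then show False using R1(2) C1(2) by simp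
    qed
  qed
qed

lemma pow0_lim: "((\<lambda>e::real. e ^ n) \<longlongrightarrow> 0 ^ n) (at_right 0)"
  by (intro tendsto_intros)

lemma asym_main:
  fixes wA wB wD R Dd :: "real \<Rightarrow> real" and NA NB ND :: nat and lA lB lD LD K0 :: real
  assumes wA: "(wA \<longlongrightarrow> lA) (at_right 0)" and wB: "(wB \<longlongrightarrow> lB) (at_right 0)"
    and wD: "(wD \<longlongrightarrow> lD) (at_right 0)"
    and R: "filterlim R at_top (at_right 0)" and eR: "((\<lambda>e. e * R e) \<longlongrightarrow> 0) (at_right 0)"
    and eD: "((\<lambda>e. e * Dd e) \<longlongrightarrow> LD) (at_right 0)" and LD: "LD > 0" and K0: "K0 > 0"
    and eq: "eventually (\<lambda>e. e ^ NA * wA e * R e + e ^ NB * wB e * Dd e + e ^ ND * wD e / (e * K0) = 0) (at_right 0)"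
    and iA: "lA = 0 \<Longrightarrow> wA = (\<lambda>_. 0)" and iB: "lB = 0 \<Longrightarrow> wB = (\<lambda>_. 0)" and iD: "lD = 0 \<Longrightarrow> wD = (\<lambda>_. 0)"
    and act: "lB \<noteq> 0 \<or> lD \<noteq> 0"
  shows "lD \<noteq> 0 \<and> (if lB \<noteq> 0 \<and> NB = ND then lB * LD else 0) + lD / K0 = 0"
proof -
  define M where "M = (if lB \<noteq> 0 \<and> lD \<noteq> 0 then min NB ND else if lB \<noteq> 0 then NB else ND)"
  have MB: "lB \<noteq> 0 \<Longrightarrow> M \<le> NB" and MD: "lD \<noteq> 0 \<Longrightarrow> M \<le> ND" by (auto simp: M_def)
  have Matt: "(lB \<noteq> 0 \<and> M = NB) \<or> (lD \<noteq> 0 \<and> M = ND)" using act by (auto simp: M_def)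
  have Rpos: "eventually (\<lambda>e. R e > 0) (at_right 0)"
    using R unfolding filterlim_at_top_dense by blast
  have epos: "eventually (\<lambda>e. e > 0) (at_right (0::real))" by (rule eventually_at_right_less)
  have iR: "((\<lambda>e. inverse (R e)) \<longlongrightarrow> 0) (at_right 0)"
    using R by (rule tendsto_inverse_0_at_top)
  show ?thesis
  proof (cases "lA \<noteq> 0 \<and> NA < M")
    case True
    define T2 where "T2 e = (if lB \<noteq> 0 then wB e * e ^ (NB - NA - 1) * (e * Dd e) * inverse (R e) else 0)" for e
    define T3 where "T3 e = (if lD \<noteq> 0 then wD e * e ^ (ND - NA - 1) * (1 / K0) * inverse (R e) else 0)" for e
    have ev: "eventually (\<lambda>e. wA e + T2 e + T3 e = 0) (at_right 0)"
      using eq Rpos epos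
    proof eventually_elim
      case (elim e)
      have B: "e ^ NB * wB e * Dd e = e ^ NA * R e * T2 e"
      proof (cases "lB \<noteq> 0")
        case True
        then have nb: "NB = NA + (NB - NA - 1) + 1" using MB \<open>lA \<noteq> 0 \<and> NA < M\<close> by auto
        have "e ^ NB = e ^ NA * e ^ (NB - NA - 1) * e"
          by (subst nb) (simp only: power_add power_one_right)
        then show ?thesis using True elim by (simp add: T2_def field_simps)
      next
        case False then show ?thesis using iB by (simp add: T2_def)
      qed
      have D: "e ^ ND * wD e / (e * K0) = e ^ NA * R e * T3 e"
      proof (cases "lD \<noteq> 0")
        case True
        then have nd: "ND = NA + (ND - NA - 1) + 1" using MD \<open>lA \<noteq> 0 \<and> NA < M\<close> by auto
        have "e ^ ND = e ^ NA * e ^ (ND - NA - 1) * e"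
          by (subst nd) (simp only: power_add power_one_right)
        then show ?thesis using True elim K0 by (simp add: T3_def field_simps)
      next
        case False then show ?thesis using iD by (simp add: T3_def)
      qed
      have "e ^ NA * R e * (wA e + T2 e + T3 e) = 0"
        using elim(1) B D by (simp add: algebra_simps)
      then show ?case using elim by simp
    qed
    have lim: "((\<lambda>e. wA e + T2 e + T3 e) \<longlongrightarrow> lA + 0 + 0) (at_right 0)"
    proof (intro tendsto_add wA)
      show "(T2 \<longlongrightarrow> 0) (at_right 0)"
      proof (cases "lB \<noteq> 0")
        case True
        have "((\<lambda>e. wB e * e ^ (NB - NA - 1) * (e * Dd e) * inverse (R e)) \<longlongrightarrow> lB * 0 ^ (NB - NA - 1) * LD * 0) (at_right 0)"
          by (rule tendsto_mult[OF tendsto_mult[OF tendsto_mult[OF wB pow0_lim] eD] iR])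
        moreover have "T2 = (\<lambda>e. wB e * e ^ (NB - NA - 1) * (e * Dd e) * inverse (R e))"
          using True by (intro ext) (simp add: T2_def)
        ultimately show ?thesis by simp
      qed (simp add: T2_def[abs_def])
      show "(T3 \<longlongrightarrow> 0) (at_right 0)"
      proof (cases "lD \<noteq> 0")
        case True
        have "((\<lambda>e. wD e * e ^ (ND - NA - 1) * (1 / K0) * inverse (R e)) \<longlongrightarrow> lD * 0 ^ (ND - NA - 1) * (1 / K0) * 0) (at_right 0)"
          by (rule tendsto_mult[OF tendsto_mult[OF tendsto_mult[OF wD pow0_lim] tendsto_const] iR])
        moreover have "T3 = (\<lambda>e. wD e * e ^ (ND - NA - 1) * (1 / K0) * inverse (R e))"
          using True by (intro ext) (simp add: T3_def)
        ultimately show ?thesis by simp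
      qed (simp add: T3_def[abs_def])
    qed
    have "lA + 0 + 0 = 0"
      by (rule tendsto_unique[OF at_right_0_nontriv lim tendsto_eventually[OF ev]])
    then show ?thesis using True by simp
  next
    case False
    then have MA: "lA \<noteq> 0 \<Longrightarrow> M \<le> NA" by auto
    define T1 where "T1 e = (if lA \<noteq> 0 then e ^ (NA - M) * wA e * (e * R e) else 0)" for e
    define T2 where "T2 e = (if lB \<noteq> 0 then e ^ (NB - M) * wB e * (e * Dd e) else 0)" for e
    define T3 where "T3 e = (if lD \<noteq> 0 then e ^ (ND - M) * wD e / K0 else 0)" for e
    have ev: "eventually (\<lambda>e. T1 e + T2 e + T3 e = 0) (at_right 0)"
      using eq epos
    proof eventually_elim
      case (elim e)
      have A: "e * (e ^ NA * wA e * R e) = e ^ M * T1 e"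
      proof (cases "lA \<noteq> 0")
        case True
        have "e ^ NA = e ^ M * e ^ (NA - M)" using MA[OF True] by (simp add: power_add[symmetric])
        then show ?thesis using True by (simp add: T1_def algebra_simps)
      qed (use iA in \<open>simp add: T1_def\<close>)
      have B: "e * (e ^ NB * wB e * Dd e) = e ^ M * T2 e"
      proof (cases "lB \<noteq> 0")
        case True
        have "e ^ NB = e ^ M * e ^ (NB - M)" using MB[OF True] by (simp add: power_add[symmetric])
        then show ?thesis using True by (simp add: T2_def algebra_simps)
      qed (use iB in \<open>simp add: T2_def\<close>)
      have D: "e * (e ^ ND * wD e / (e * K0)) = e ^ M * T3 e"
      proof (cases "lD \<noteq> 0")
        case True
        have "e ^ ND = e ^ M * e ^ (ND - M)" using MD[OF True] by (simp add: power_add[symmetric])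
        then show ?thesis using True elim K0 by (simp add: T3_def field_simps)
      qed (use iD in \<open>simp add: T3_def\<close>)
      have "e * (e ^ NA * wA e * R e + e ^ NB * wB e * Dd e + e ^ ND * wD e / (e * K0)) = 0"
        using elim(1) by simp
      then have "e ^ M * (T1 e + T2 e + T3 e) = 0"
        using A B D by (simp add: algebra_simps)
      then show ?case using elim by simp
    qed
    have lim: "((\<lambda>e. T1 e + T2 e + T3 e) \<longlongrightarrow>
        0 + (if lB \<noteq> 0 then 0 ^ (NB - M) * lB * LD else 0) + (if lD \<noteq> 0 then 0 ^ (ND - M) * lD / K0 else 0)) (at_right 0)"
    proof (intro tendsto_add)
      show "(T1 \<longlongrightarrow> 0) (at_right 0)"
      proof (cases "lA \<noteq> 0")
        case True
        have "((\<lambda>e. e ^ (NA - M) * wA e * (e * R e)) \<longlongrightarrow> 0 ^ (NA - M) * lA * 0) (at_right 0)"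
          by (rule tendsto_mult[OF tendsto_mult[OF pow0_lim wA] eR])
        moreover have "T1 = (\<lambda>e. e ^ (NA - M) * wA e * (e * R e))"
          using True by (intro ext) (simp add: T1_def)
        ultimately show ?thesis by simp
      qed (simp add: T1_def[abs_def])
      show "(T2 \<longlongrightarrow> (if lB \<noteq> 0 then 0 ^ (NB - M) * lB * LD else 0)) (at_right 0)"
        unfolding T2_def[abs_def] by (cases "lB \<noteq> 0") (simp_all add: tendsto_mult[OF tendsto_mult[OF pow0_lim wB] eD])
      show "(T3 \<longlongrightarrow> (if lD \<noteq> 0 then 0 ^ (ND - M) * lD / K0 else 0)) (at_right 0)"
        unfolding T3_def[abs_def] using K0 by (cases "lD \<noteq> 0") (simp_all add: tendsto_divide[OF tendsto_mult[OF pow0_lim wD] tendsto_const])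
    qed
    have Z: "0 + (if lB \<noteq> 0 then 0 ^ (NB - M) * lB * LD else 0) + (if lD \<noteq> 0 then 0 ^ (ND - M) * lD / K0 else 0) = 0"
      by (rule tendsto_unique[OF at_right_0_nontriv lim tendsto_eventually[OF ev]])
    show ?thesis
    proof (cases "lD \<noteq> 0 \<and> ND = M")
      case True
      then show ?thesis using Z MB K0 by (auto split: if_splits simp: power_0_left)
    next
      case False
      then have "lB \<noteq> 0 \<and> M = NB" using Matt by auto
      moreover have "(if lD \<noteq> 0 then 0 ^ (ND - M) * lD / K0 else 0) = 0"
        using False MD by auto
      ultimately have "lB * LD = 0" using Z by simp
      then show ?thesis using LD \<open>lB \<noteq> 0 \<and> M = NB\<close> by simp
    qed
  qed
qed

lemma rat4_zeroP: "rat4 (\<lambda>_. 0) Q x y z p = 0"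
  by (simp add: rat4_def)

lemma clear4:
  fixes pa pb pc pd qa qb qc qd F D J S :: real
  assumes "qa \<noteq> 0" "qb \<noteq> 0" "qc \<noteq> 0" "qd \<noteq> 0" "S \<noteq> 0"
    and "pa / qa * F + pb / qb * D + pc / qc * J + pd / qd / S = 0"
  shows "(pc * qa * qb * qd) * J = - (F * (pa * qb * qc * qd) + D * (pb * qa * qc * qd) + (1 / S) * (pd * qa * qb * qc))"
proof -
  have "qa * qb * qc * qd * (pa / qa * F + pb / qb * D + pc / qc * J + pd / qd / S) = 0"
    using assms(6) by simp
  moreover have "qa * qb * qc * qd * (pa / qa * F) = F * (pa * qb * qc * qd)" using assms(1) by (simp add: field_simps)
  moreover have "qa * qb * qc * qd * (pb / qb * D) = D * (pb * qa * qc * qd)" using assms(2) by (simp add: field_simps)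
  moreover have "qa * qb * qc * qd * (pc / qc * J) = (pc * qa * qb * qd) * J" using assms(3) by (simp add: field_simps)
  moreover have "qa * qb * qc * qd * (pd / qd / S) = (1 / S) * (pd * qa * qb * qc)" using assms(4,5) by (simp add: field_simps)
  ultimately show ?thesis by (simp only: distrib_left)
qed

lemma step1:
  fixes Pa Qa Pb Qb Pc Qc Pd Qd :: poly4
  assumes polys: "is_poly4 Pa" "is_poly4 Qa" "is_poly4 Pb" "is_poly4 Qb"
                 "is_poly4 Pc" "is_poly4 Qc" "is_poly4 Pd" "is_poly4 Qd"
    and denoms: "Qa \<noteq> (\<lambda>_. 0)" "Qb \<noteq> (\<lambda>_. 0)" "Qc \<noteq> (\<lambda>_. 0)" "Qd \<noteq> (\<lambda>_. 0)"
    and ident: "\<And>x y z p. x > 0 \<Longrightarrow> y > 0 \<Longrightarrow> z > 0 \<Longrightarrow> p > 0 \<Longrightarrow>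
        eval4 Qa x y z p \<noteq> 0 \<Longrightarrow> eval4 Qb x y z p \<noteq> 0 \<Longrightarrow>
        eval4 Qc x y z p \<noteq> 0 \<Longrightarrow> eval4 Qd x y z p \<noteq> 0 \<Longrightarrow>
        rat4 Pa Qa x y z p * RF x y z + rat4 Pb Qb x y z p * RD x y z
        + rat4 Pc Qc x y z p * RJ x y z p + rat4 Pd Qd x y z p / sqrt (x * y * z) = 0"
  shows "Pc = (\<lambda>_. 0)"
proof (rule ccontr)
  assume nz: "Pc \<noteq> (\<lambda>_. 0)"
  obtain x0 y0 z0 p0 where pt: "x0 > 0" "y0 > 0" "z0 > 0" "p0 > 0"
    and nzs: "\<forall>P\<in>{Pc, Qa, Qb, Qc, Qd}. eval4 P x0 y0 z0 p0 \<noteq> 0"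
    using generic_point[of "{Pc, Qa, Qb, Qc, Qd}"] polys denoms nz by auto
  define pa where "pa = polyP Pa x0 y0 z0"
  define pb where "pb = polyP Pb x0 y0 z0"
  define pc where "pc = polyP Pc x0 y0 z0"
  define pd where "pd = polyP Pd x0 y0 z0"
  define qa where "qa = polyP Qa x0 y0 z0"
  define qb where "qb = polyP Qb x0 y0 z0"
  define qc where "qc = polyP Qc x0 y0 z0"
  define qd where "qd = polyP Qd x0 y0 z0"
  have ev: "\<And>P p. poly (polyP P x0 y0 z0) p = eval4 P x0 y0 z0 p" by (rule poly_polyP)
  have nz0: "pc \<noteq> 0" "qa \<noteq> 0" "qb \<noteq> 0" "qc \<noteq> 0" "qd \<noteq> 0"
    using nzs by (auto simp: pc_def qa_def qb_def qc_def qd_def) (metis ev poly_0)+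
  define F0 where "F0 = RF x0 y0 z0"
  define D0 where "D0 = RD x0 y0 z0"
  define S0 where "S0 = sqrt (x0 * y0 * z0)"
  define C where "C = pc * qa * qb * qd"
  define R where "R = - (smult F0 (pa * qb * qc * qd) + smult D0 (pb * qa * qc * qd) + smult (1 / S0) (pd * qa * qb * qc))"
  have Cnz: "C \<noteq> 0" using nz0 by (simp add: C_def)
  have "eventually (\<lambda>p. poly C p * RJ x0 y0 z0 p = poly R p) (at_right 0)"
    using poly_eventually_nz[OF nz0(2)] poly_eventually_nz[OF nz0(3)] poly_eventually_nz[OF nz0(4)]
      poly_eventually_nz[OF nz0(5)] eventually_at_right_less[of "0::real"]
  proof eventually_elim
    case (elim p)
    have E: "rat4 Pa Qa x0 y0 z0 p * F0 + rat4 Pb Qb x0 y0 z0 p * D0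
        + rat4 Pc Qc x0 y0 z0 p * RJ x0 y0 z0 p + rat4 Pd Qd x0 y0 z0 p / S0 = 0"
      unfolding F0_def D0_def S0_def
      using elim pt by (intro ident) (auto simp: qa_def qb_def qc_def qd_def ev)
    have E2: "poly pa p / poly qa p * F0 + poly pb p / poly qb p * D0
        + poly pc p / poly qc p * RJ x0 y0 z0 p + poly pd p / poly qd p / S0 = 0"
      using E by (simp add: rat4_def pa_def pb_def pc_def pd_def qa_def qb_def qc_def qd_def ev)
    have "S0 \<noteq> 0" using pt by (simp add: S0_def)
    from clear4[OF elim(1-4) this E2] show ?case unfolding C_def R_def by simp
  qed
  then show False
    using log_lemma[OF RJ_lim1[OF pt(1-3)] RJ_lim2[OF pt(1-3)] Cnz] by blast
qed

lemma clear3: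
  fixes pa pb pd qa qb qd F D S :: real
  assumes "qa \<noteq> 0" "qb \<noteq> 0" "qd \<noteq> 0" "S \<noteq> 0"
    and "pa / qa * F + pb / qb * D + pd / qd / S = 0"
  shows "F * (pa * qb * qd) + D * (pb * qa * qd) + (pd * qa * qb) / S = 0"
proof -
  have "qa * qb * qd * (pa / qa * F + pb / qb * D + pd / qd / S) = 0"
    using assms(5) by simp
  moreover have "qa * qb * qd * (pa / qa * F) = F * (pa * qb * qd)" using assms(1) by (simp add: field_simps)
  moreover have "qa * qb * qd * (pb / qb * D) = D * (pb * qa * qd)" using assms(2) by (simp add: field_simps)
  moreover have "qa * qb * qd * (pd / qd / S) = (pd * qa * qb) / S" using assms(3,4) by (simp add: field_simps)
  ultimately show ?thesis by (simp only: distrib_left)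
qed

lemma pointwise:
  fixes Pa Qa Pb Qb Qc Pd Qd :: poly4 and a y c p :: real
  assumes polys: "is_poly4 Pa" "is_poly4 Qa" "is_poly4 Pb" "is_poly4 Qb" "is_poly4 Qc" "is_poly4 Pd" "is_poly4 Qd"
    and ident: "\<And>x y z p. x > 0 \<Longrightarrow> y > 0 \<Longrightarrow> z > 0 \<Longrightarrow> p > 0 \<Longrightarrow>
        eval4 Qa x y z p \<noteq> 0 \<Longrightarrow> eval4 Qb x y z p \<noteq> 0 \<Longrightarrow>
        eval4 Qc x y z p \<noteq> 0 \<Longrightarrow> eval4 Qd x y z p \<noteq> 0 \<Longrightarrow>
        rat4 Pa Qa x y z p * RF x y z + rat4 Pb Qb x y z p * RD x y z + rat4 Pd Qd x y z p / sqrt (x * y * z) = 0"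
    and pt: "a > 0" "y > 0" "c > 0" "p > 0"
    and nzQ: "eval4 (LS Qa) a y c p \<noteq> 0" "eval4 (LS Qb) a y c p \<noteq> 0" "eval4 (LS Qc) a y c p \<noteq> 0" "eval4 (LS Qd) a y c p \<noteq> 0"
    and nzP: "Pa \<noteq> (\<lambda>_. 0) \<Longrightarrow> eval4 (LS Pa) a y c p \<noteq> 0" "Pb \<noteq> (\<lambda>_. 0) \<Longrightarrow> eval4 (LS Pb) a y c p \<noteq> 0"
       "Pd \<noteq> (\<lambda>_. 0) \<Longrightarrow> eval4 (LS Pd) a y c p \<noteq> 0"
    and act: "Pb \<noteq> (\<lambda>_. 0) \<or> Pd \<noteq> (\<lambda>_. 0)"
  shows "Pd \<noteq> (\<lambda>_. 0) \<and>
    (if Pb \<noteq> (\<lambda>_. 0) \<and> ordS Pb + ordS Qa + ordS Qd = ordS Pd + ordS Qa + ordS Qb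
     then (eval4 (LS Pb) a y c p * eval4 (LS Qa) a y c p * eval4 (LS Qd) a y c p) * (3 / (sqrt y * sqrt c * (sqrt a + sqrt c)))
     else 0)
    + (eval4 (LS Pd) a y c p * eval4 (LS Qa) a y c p * eval4 (LS Qb) a y c p) / sqrt (a * y * c) = 0"
proof -
  define v where "v P e = eval4 P (e * a) y (e * c) p / e ^ ordS P" for P e
  define l where "l P = eval4 (LS P) a y c p" for P
  have vlim: "\<And>P. is_poly4 P \<Longrightarrow> (v P \<longlongrightarrow> l P) (at_right 0)"
    unfolding v_def[abs_def] l_def by (rule LS_lim)
  have vE: "eval4 P (e * a) y (e * c) p = e ^ ordS P * v P e" if "e > 0" for P e
    using that by (simp add: v_def)
  have v0: "v (\<lambda>_. 0) = (\<lambda>_. 0)" by (simp add: v_def[abs_def])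
  have l0: "l (\<lambda>_. 0) = 0" by (simp add: l_def LS_zero)
  define wA where "wA e = v Pa e * v Qb e * v Qd e" for e
  define wB where "wB e = v Pb e * v Qa e * v Qd e" for e
  define wD where "wD e = v Pd e * v Qa e * v Qb e" for e
  define lA where "lA = l Pa * l Qb * l Qd"
  define lB where "lB = l Pb * l Qa * l Qd"
  define lD where "lD = l Pd * l Qa * l Qb"
  define NA where "NA = ordS Pa + ordS Qb + ordS Qd"
  define NB where "NB = ordS Pb + ordS Qa + ordS Qd"
  define ND where "ND = ordS Pd + ordS Qa + ordS Qb"
  define LD where "LD = 3 / (sqrt y * sqrt c * (sqrt a + sqrt c))"
  define K0 where "K0 = sqrt (a * y * c)"
  have LD: "LD > 0" using pt by (auto simp: LD_def intro!: mult_pos_pos add_pos_pos)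
  have K0: "K0 > 0" using pt by (simp add: K0_def)
  have lQ: "l Qa \<noteq> 0" "l Qb \<noteq> 0" "l Qc \<noteq> 0" "l Qd \<noteq> 0" using nzQ by (simp_all add: l_def)
  have wAl: "(wA \<longlongrightarrow> lA) (at_right 0)" unfolding wA_def[abs_def] lA_def
    by (intro tendsto_mult vlim polys)
  have wBl: "(wB \<longlongrightarrow> lB) (at_right 0)" unfolding wB_def[abs_def] lB_def
    by (intro tendsto_mult vlim polys)
  have wDl: "(wD \<longlongrightarrow> lD) (at_right 0)" unfolding wD_def[abs_def] lD_def
    by (intro tendsto_mult vlim polys)
  have vnz: "eventually (\<lambda>e. v Q e \<noteq> 0) (at_right 0)" if "is_poly4 Q" "l Q \<noteq> 0" for Q
    using vlim[OF that(1)] that(2) by (rule tendsto_imp_eventually_ne)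
  have eq: "eventually (\<lambda>e. e ^ NA * wA e * RF (e * a) y (e * c) + e ^ NB * wB e * RD (e * a) y (e * c)
      + e ^ ND * wD e / (e * K0) = 0) (at_right 0)"
    using vnz[OF polys(2) lQ(1)] vnz[OF polys(4) lQ(2)] vnz[OF polys(5) lQ(3)] vnz[OF polys(7) lQ(4)]
      eventually_at_right_less[of "0::real"]
  proof eventually_elim
    case (elim e)
    have ea: "e * a > 0" "e * c > 0" using elim pt by auto
    have qnz: "eval4 Qa (e * a) y (e * c) p \<noteq> 0" "eval4 Qb (e * a) y (e * c) p \<noteq> 0"
      "eval4 Qc (e * a) y (e * c) p \<noteq> 0" "eval4 Qd (e * a) y (e * c) p \<noteq> 0"
      using elim by (simp_all add: vE)
    have S: "sqrt (e * a * y * (e * c)) = e * K0"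
    proof -
      have "e * a * y * (e * c) = (e * e) * (a * y * c)" by (simp add: algebra_simps)
      then show ?thesis using elim by (simp add: K0_def real_sqrt_mult)
    qed
    have E: "rat4 Pa Qa (e * a) y (e * c) p * RF (e * a) y (e * c) + rat4 Pb Qb (e * a) y (e * c) p * RD (e * a) y (e * c)
        + rat4 Pd Qd (e * a) y (e * c) p / (e * K0) = 0"
      using ident[OF ea(1) pt(2) ea(2) pt(4) qnz] by (simp add: S)
    have "e * K0 \<noteq> 0" using elim K0 by simp
    from clear3[OF qnz(1,2,4) this E[unfolded rat4_def]]
    have C: "RF (e * a) y (e * c) * (eval4 Pa (e * a) y (e * c) p * eval4 Qb (e * a) y (e * c) p * eval4 Qd (e * a) y (e * c) p)
       + RD (e * a) y (e * c) * (eval4 Pb (e * a) y (e * c) p * eval4 Qa (e * a) y (e * c) p * eval4 Qd (e * a) y (e * c) p)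
       + (eval4 Pd (e * a) y (e * c) p * eval4 Qa (e * a) y (e * c) p * eval4 Qb (e * a) y (e * c) p) / (e * K0) = 0" .
    show ?case using C unfolding vE[OF elim(5)] wA_def wB_def wD_def NA_def NB_def ND_def
      by (simp add: power_add algebra_simps)
  qed
  have iA: "wA = (\<lambda>_. 0)" if "lA = 0"
  proof -
    have "l Pa = 0" using that lQ by (simp add: lA_def)
    then have "Pa = (\<lambda>_. 0)" using nzP(1) by (auto simp: l_def)
    then show ?thesis by (simp add: wA_def[abs_def] v0)
  qed
  have iB: "wB = (\<lambda>_. 0)" if "lB = 0"
  proof -
    have "l Pb = 0" using that lQ by (simp add: lB_def)
    then have "Pb = (\<lambda>_. 0)" using nzP(2) by (auto simp: l_def)
    then show ?thesis by (simp add: wB_def[abs_def] v0)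
  qed
  have iD: "wD = (\<lambda>_. 0)" if "lD = 0"
  proof -
    have "l Pd = 0" using that lQ by (simp add: lD_def)
    then have "Pd = (\<lambda>_. 0)" using nzP(3) by (auto simp: l_def)
    then show ?thesis by (simp add: wD_def[abs_def] v0)
  qed
  have lBiff: "lB \<noteq> 0 \<longleftrightarrow> Pb \<noteq> (\<lambda>_. 0)"
    using nzP(2) lQ l0 by (auto simp: lB_def l_def LS_zero)
  have lDiff: "lD \<noteq> 0 \<longleftrightarrow> Pd \<noteq> (\<lambda>_. 0)"
    using nzP(3) lQ l0 by (auto simp: lD_def l_def LS_zero)
  have act': "lB \<noteq> 0 \<or> lD \<noteq> 0" using act lBiff lDiff by blast
  have res: "lD \<noteq> 0 \<and> (if lB \<noteq> 0 \<and> NB = ND then lB * LD else 0) + lD / K0 = 0"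
    by (rule asym_main[OF wAl wBl wDl RF_lim1[OF pt(1-3)] RF_lim2[OF pt(1-3)] RD_lim[OF pt(1-3), folded LD_def] LD K0 eq iA iB iD act'])
  have "Pd \<noteq> (\<lambda>_. 0) \<and> (if Pb \<noteq> (\<lambda>_. 0) \<and> NB = ND then lB * LD else 0) + lD / K0 = 0"
    using res lBiff lDiff by (simp only:, simp)
  from this[unfolded lB_def lD_def l_def NB_def ND_def LD_def K0_def] show ?thesis .
qed

lemma alg_sq:
  fixes a y c lB lD :: real and fl :: bool
  assumes pt: "a > 0" "y > 0" "c > 0"
    and rel: "(if fl then lB * (3 / (sqrt y * sqrt c * (sqrt a + sqrt c))) else 0) + lD / sqrt (a * y * c) = 0"
  shows "c * lD ^ 2 = a * (3 * (if fl then 1 else 0) * lB + lD) ^ 2"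
proof -
  define sa sy sc where "sa = sqrt a" and "sy = sqrt y" and "sc = sqrt c"
  have p: "sa > 0" "sy > 0" "sc > 0" using pt by (auto simp: sa_def sy_def sc_def)
  have K: "sqrt (a * y * c) = sa * sy * sc" by (simp add: sa_def sy_def sc_def real_sqrt_mult)
  have sq: "a = sa * sa" "c = sc * sc" using pt by (auto simp: sa_def sc_def)
  show ?thesis
  proof (cases fl)
    case True
    have "lB * (3 / (sy * sc * (sa + sc))) + lD / (sa * sy * sc) = 0"
      using rel True K by (simp add: sa_def sy_def sc_def)
    then have "(sa * sy * sc * (sa + sc)) * (lB * (3 / (sy * sc * (sa + sc))) + lD / (sa * sy * sc)) = 0" by simp
    moreover have "(sa * sy * sc * (sa + sc)) * (lB * (3 / (sy * sc * (sa + sc)))) = 3 * lB * sa"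
    proof -
      have gen: "\<And>Y::real. Y \<noteq> 0 \<Longrightarrow> (sa * Y) * (lB * (3 / Y)) = 3 * lB * sa" by (simp add: field_simps)
      have "sy * sc * (sa + sc) \<noteq> 0" using p by simp
      from gen[OF this] show ?thesis by (simp only: mult.assoc)
    qed
    moreover have "(sa * sy * sc * (sa + sc)) * (lD / (sa * sy * sc)) = lD * (sa + sc)"
      using p by (simp add: field_simps)
    ultimately have "3 * lB * sa + lD * (sa + sc) = 0" by (simp only: distrib_left)
    then have "lD * sc = - sa * (3 * lB + lD)" by (simp add: algebra_simps)
    then have "(lD * sc) ^ 2 = (sa * (3 * lB + lD)) ^ 2" by (simp add: power2_eq_square)
    then show ?thesis using True unfolding sq by (simp add: power2_eq_square algebra_simps)
  next
    case False
    then have "lD / sqrt (a * y * c) = 0" using rel by simp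
    then have "lD = 0" using pt by simp
    then show ?thesis using False by simp
  qed
qed

lemma odd_even_deg:
  fixes U W :: "real poly" and a :: real
  assumes "U \<noteq> 0" "a \<noteq> 0" "[:0, 1:] * U ^ 2 = smult a (W ^ 2)"
  shows False
proof -
  have X: "[:0, 1::real:] \<noteq> 0" by simp
  have dl: "degree ([:0, 1:] * U ^ 2) = 1 + 2 * degree U"
    using assms(1) X by (simp add: degree_mult_eq degree_power_eq)
  show False
  proof (cases "W = 0")
    case True
    then have "[:0, 1:] * U ^ 2 = 0" using assms(3) by simp
    then show False using assms(1) X by simp
  next
    case False
    have "degree (smult a (W ^ 2)) = 2 * degree W"
      using assms(2) False by (simp add: degree_power_eq)
    moreover have "degree ([:0, 1:] * U ^ 2) = degree (smult a (W ^ 2))" using assms(3) by (rule arg_cong)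
    ultimately have "1 + 2 * degree U = 2 * degree W" using dl by linarith
    then show False by presburger
  qed
qed

lemma step2:
  fixes Pa Qa Pb Qb Qc Pd Qd :: poly4
  assumes polys: "is_poly4 Pa" "is_poly4 Qa" "is_poly4 Pb" "is_poly4 Qb" "is_poly4 Qc" "is_poly4 Pd" "is_poly4 Qd"
    and denoms: "Qa \<noteq> (\<lambda>_. 0)" "Qb \<noteq> (\<lambda>_. 0)" "Qc \<noteq> (\<lambda>_. 0)" "Qd \<noteq> (\<lambda>_. 0)"
    and ident: "\<And>x y z p. x > 0 \<Longrightarrow> y > 0 \<Longrightarrow> z > 0 \<Longrightarrow> p > 0 \<Longrightarrow>
        eval4 Qa x y z p \<noteq> 0 \<Longrightarrow> eval4 Qb x y z p \<noteq> 0 \<Longrightarrow>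
        eval4 Qc x y z p \<noteq> 0 \<Longrightarrow> eval4 Qd x y z p \<noteq> 0 \<Longrightarrow>
        rat4 Pa Qa x y z p * RF x y z + rat4 Pb Qb x y z p * RD x y z + rat4 Pd Qd x y z p / sqrt (x * y * z) = 0"
  shows "Pb = (\<lambda>_. 0) \<and> Pd = (\<lambda>_. 0)"
proof (rule ccontr)
  assume "\<not> (Pb = (\<lambda>_. 0) \<and> Pd = (\<lambda>_. 0))"
  then have act: "Pb \<noteq> (\<lambda>_. 0) \<or> Pd \<noteq> (\<lambda>_. 0)" by blast
  define G where "G = {P \<in> {Qa, Qb, Qc, Qd, Pa, Pb, Pd}. P \<noteq> (\<lambda>_. 0)}"
  define F where "F = LS ` G"
  have finF: "finite F" by (simp add: F_def G_def)
  have Gp: "is_poly4 P \<and> P \<noteq> (\<lambda>_. 0)" if "P \<in> G" for P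
    using that polys by (auto simp: G_def)
  have Fok: "is_poly4 P \<and> P \<noteq> (\<lambda>_. 0)" if "P \<in> F" for P
    using that Gp LS_poly LS_nz by (auto simp: F_def)
  obtain a0 y0 c0 p0 where pt0: "a0 > 0" "y0 > 0" "c0 > 0" "p0 > 0"
    and nz0: "\<forall>P\<in>F. eval4 P a0 y0 c0 p0 \<noteq> 0"
    using generic_point[OF finF Fok] by blast
  define good where "good c \<longleftrightarrow> c > 0 \<and> (\<forall>P\<in>F. eval4 P a0 y0 c p0 \<noteq> 0)" for c
  have inF: "LS P \<in> F" if "P \<in> {Qa, Qb, Qc, Qd, Pa, Pb, Pd}" "P \<noteq> (\<lambda>_. 0)" for P
    using that by (auto simp: F_def G_def)
  define fl where "fl \<longleftrightarrow> Pb \<noteq> (\<lambda>_. 0) \<and> ordS Pb + ordS Qa + ordS Qd = ordS Pd + ordS Qa + ordS Qb"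
  have PW: "Pd \<noteq> (\<lambda>_. 0) \<and>
    (if fl
     then (eval4 (LS Pb) a0 y0 c p0 * eval4 (LS Qa) a0 y0 c p0 * eval4 (LS Qd) a0 y0 c p0) * (3 / (sqrt y0 * sqrt c * (sqrt a0 + sqrt c)))
     else 0)
    + (eval4 (LS Pd) a0 y0 c p0 * eval4 (LS Qa) a0 y0 c p0 * eval4 (LS Qb) a0 y0 c p0) / sqrt (a0 * y0 * c) = 0"
    if gc: "good c" for c
    unfolding fl_def
  proof (rule pointwise[OF polys ident])
    show "a0 > 0" "y0 > 0" "c > 0" "p0 > 0" using pt0 gc by (auto simp: good_def)
    show "eval4 (LS Qa) a0 y0 c p0 \<noteq> 0" "eval4 (LS Qb) a0 y0 c p0 \<noteq> 0"
      "eval4 (LS Qc) a0 y0 c p0 \<noteq> 0" "eval4 (LS Qd) a0 y0 c p0 \<noteq> 0"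
      using gc inF denoms by (auto simp: good_def)
    show "Pa \<noteq> (\<lambda>_. 0) \<Longrightarrow> eval4 (LS Pa) a0 y0 c p0 \<noteq> 0"
      "Pb \<noteq> (\<lambda>_. 0) \<Longrightarrow> eval4 (LS Pb) a0 y0 c p0 \<noteq> 0"
      "Pd \<noteq> (\<lambda>_. 0) \<Longrightarrow> eval4 (LS Pd) a0 y0 c p0 \<noteq> 0"
      using gc inF by (auto simp: good_def)
    show "Pb \<noteq> (\<lambda>_. 0) \<or> Pd \<noteq> (\<lambda>_. 0)" by (rule act)
  qed (auto)
  have g0: "good c0" using pt0 nz0 by (simp add: good_def)
  have Pd: "Pd \<noteq> (\<lambda>_. 0)" using PW[OF g0] by blast
  define z where "z P = polyZ (LS P) a0 y0 p0" for P
  have pz: "poly (z P) c = eval4 (LS P) a0 y0 c p0" for P c by (simp add: z_def poly_polyZ)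
  define UB where "UB = z Pb * z Qa * z Qd"
  define UD where "UD = z Pd * z Qa * z Qb"
  define W where "W = smult (3 * (if fl then 1 else 0)) UB + UD"
  have eqc: "poly ([:0, 1:] * UD ^ 2) c = poly (smult a0 (W ^ 2)) c" if gc: "good c" for c
  proof -
    have c: "c > 0" using gc by (simp add: good_def)
    have "c * (eval4 (LS Pd) a0 y0 c p0 * eval4 (LS Qa) a0 y0 c p0 * eval4 (LS Qb) a0 y0 c p0) ^ 2 =
      a0 * (3 * (if fl then 1 else 0) * (eval4 (LS Pb) a0 y0 c p0 * eval4 (LS Qa) a0 y0 c p0 * eval4 (LS Qd) a0 y0 c p0)
        + eval4 (LS Pd) a0 y0 c p0 * eval4 (LS Qa) a0 y0 c p0 * eval4 (LS Qb) a0 y0 c p0) ^ 2"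
      by (rule alg_sq[OF pt0(1,2) c]) (use PW[OF gc] in simp)
    then show ?thesis by (simp add: W_def UB_def UD_def pz)
  qed
  have zF: "z P \<noteq> 0" if "LS P \<in> F" for P
  proof
    assume "z P = 0"
    then have "eval4 (LS P) a0 y0 c0 p0 = 0" using pz[of P c0] by simp
    then show False using nz0 that by blast
  qed
  have UDnz: "UD \<noteq> 0" unfolding UD_def using zF inF Pd denoms by auto
  have "infinite {c. good c}"
  proof -
    define Z where "Z = (\<Union>P\<in>F. {c. poly (polyZ P a0 y0 p0) c = 0})"
    have "finite Z" unfolding Z_def
    proof (intro finite_UN_I finF poly_roots_finite)
      fix P assume P: "P \<in> F"
      show "polyZ P a0 y0 p0 \<noteq> 0"
      proof
        assume "polyZ P a0 y0 p0 = 0"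
        then have "eval4 P a0 y0 c0 p0 = 0" using poly_polyZ[of P a0 y0 p0 c0] by simp
        then show False using nz0 P by blast
      qed
    qed
    then have "infinite ({0<..} - Z)" by (intro Diff_infinite_finite infinite_Ioi)
    moreover have "{0<..} - Z \<subseteq> {c. good c}"
      by (auto simp: Z_def good_def poly_polyZ)
    ultimately show ?thesis using finite_subset by blast
  qed
  then have "[:0, 1:] * UD ^ 2 = smult a0 (W ^ 2)"
    by (rule poly_eq_infinite) (use eqc in blast)
  then show False using odd_even_deg[OF UDnz, of a0 W] pt0 by simp
qed

theorem theorem1:
  fixes Pa Qa Pb Qb Pc Qc Pd Qd :: poly4
  assumes polys: "is_poly4 Pa" "is_poly4 Qa" "is_poly4 Pb" "is_poly4 Qb"
                 "is_poly4 Pc" "is_poly4 Qc" "is_poly4 Pd" "is_poly4 Qd"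
    and denoms: "Qa \<noteq> (\<lambda>_. 0)" "Qb \<noteq> (\<lambda>_. 0)" "Qc \<noteq> (\<lambda>_. 0)" "Qd \<noteq> (\<lambda>_. 0)"
    and ident: "\<And>x y z p. x > 0 \<Longrightarrow> y > 0 \<Longrightarrow> z > 0 \<Longrightarrow> p > 0 \<Longrightarrow>
        eval4 Qa x y z p \<noteq> 0 \<Longrightarrow> eval4 Qb x y z p \<noteq> 0 \<Longrightarrow>
        eval4 Qc x y z p \<noteq> 0 \<Longrightarrow> eval4 Qd x y z p \<noteq> 0 \<Longrightarrow>
        rat4 Pa Qa x y z p * RF x y z + rat4 Pb Qb x y z p * RD x y z
        + rat4 Pc Qc x y z p * RJ x y z p + rat4 Pd Qd x y z p / sqrt (x * y * z) = 0"
  shows "Pa = (\<lambda>_. 0) \<and> Pb = (\<lambda>_. 0) \<and> Pc = (\<lambda>_. 0) \<and> Pd = (\<lambda>_. 0)"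
proof -
  have Pc: "Pc = (\<lambda>_. 0)" by (rule step1[OF polys denoms ident])
  have ident3: "rat4 Pa Qa x y z p * RF x y z + rat4 Pb Qb x y z p * RD x y z + rat4 Pd Qd x y z p / sqrt (x * y * z) = 0"
    if "x > 0" "y > 0" "z > 0" "p > 0" "eval4 Qa x y z p \<noteq> 0" "eval4 Qb x y z p \<noteq> 0"
       "eval4 Qc x y z p \<noteq> 0" "eval4 Qd x y z p \<noteq> 0" for x y z p
    using ident[OF that] by (simp add: Pc rat4_zeroP)
  have PbPd: "Pb = (\<lambda>_. 0) \<and> Pd = (\<lambda>_. 0)"
    by (rule step2[OF polys(1-4,6-8) denoms ident3])
  have Pa: "Pa = (\<lambda>_. 0)"
  proof (rule ccontr)
    assume nz: "Pa \<noteq> (\<lambda>_. 0)"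
    obtain x0 y0 z0 p0 where pt: "x0 > 0" "y0 > 0" "z0 > 0" "p0 > 0"
      and nzs: "\<forall>P\<in>{Pa, Qa, Qb, Qc, Qd}. eval4 P x0 y0 z0 p0 \<noteq> 0"
      using generic_point[of "{Pa, Qa, Qb, Qc, Qd}"] polys denoms nz by auto
    have "rat4 Pa Qa x0 y0 z0 p0 * RF x0 y0 z0 = 0"
      using ident3[OF pt] nzs PbPd by (simp add: rat4_zeroP)
    moreover have "rat4 Pa Qa x0 y0 z0 p0 \<noteq> 0" using nzs by (simp add: rat4_def)
    moreover have "RF x0 y0 z0 > 0" by (rule RF_pos[OF pt(1-3)])
    ultimately show False by simp
  qed
  show ?thesis using Pa PbPd Pc by blast
qed

end
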